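(* Suppose assumptions (A1)–(A5) below hold. Then the feasible region of the maximum likelihood estimation problem $$\max_{(x_t,\theta_t,u_t)}\ \sum_{i=0}^{n_x}\log p_\nu(\tilde x_{t_i}-Dx_{t_i})+\sum_{j=0}^{n_u}\log p_\omega(\tilde y_{\tau_j}-Cu_{\tau_j})$$ subject to, for all $t$: $u_t\in\arg\max\{f(x_{t+1},u,\theta_t,\pi_t): x_{t+1}=h(x_t,u),\ u\in\mathcal U\}$, $x_{t+1}=h(x_t,u_t)$, $\theta_{t+1}=g(x_t,u_t,\theta_t,\pi_t)$, $x_t\in\mathcal X$, $\theta_t\in\Theta$, can be formulated as a set of mixed integer linear constraints with respect to $(x_t,u_t,\theta_t,\pi_t)$ (possibly with additional auxiliary variables).
   Context: Model. Let $\mathcal X,\mathcal U,\Pi,\Theta$ be compact finite-dimensional sets with $\mathcal X,\mathcal U,\Theta$ convex. At each discrete time $t$ an agent has system state $x_t\in\mathcal X$, motivational state $\theta_t\in\Theta$, decision $u_t\in\mathcal U$; a coordinator applies incentive $\pi_t\in\Pi$. Decisions and states obey the constraints displayed in the claim. Observations: $\tilde x_{t_i}=Dx_{t_i}+\nu_{t_i}$ ($i=0,\dots,n_x$), $\tilde y_{\tau_i}=Cu_{\tau_i}+\omega_{\tau_i}$ ($i=0,\dots,n_u$), $C,D$ known matrices, $p_\nu,p_\omega$ the noise densities. $(a;b)$ denotes vertical concatenation. Assumptions: (A1) $\mathcal X,\mathcal U,\Pi,\Theta$ bounded finite-dimensional; $\mathcal X,\mathcal U,\Theta$ convex polyhedra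 described by finitely many linear inequalities; $\Pi$ described by finitely many mixed integer linear constraints. (A2) $f:\mathcal X\times\mathcal U\times\Theta\times\Pi\to\mathbb R$ deterministic, concave in $x$, strictly concave in $u$, concave in $\theta$, and $f(x,u,\theta,\pi)=-(x;u)^TQ(x;u)+(\theta;\pi)^TH(x;u)+\sum_{i=1}^K\min_{j\in J_i}\{F_{i,j}(x;u;\theta;\pi)+\zeta_{i,j}\}$ with $Q$ positive semidefinite, matrices $H,F_{i,j}$, scalars $\zeta_{i,j}$, finite index sets $J_i$. (A3) $h,g$ deterministic surjective with $h(x,u)=Ax+Bu+k$ and $g(x,u,\theta,\pi)=G_i(x;u;\theta;\pi)+\chi_i$ whenever $B_i(x;u;\theta;\pi)\le\psi_i$ (finitely many $i$; matrices $A,B,G_i,B_i$; constants $k,\psi_i,\chi_i$), the polytopes $\{B_i(x;u;\theta;\pi)\le\psi_i\}$ having disjoint interiors. (A4) The noises $\{\nu_{t_i}\},\{\omega_{\tau_i}\}$ are i.i.d. sequences of random vectors with i.i.d. components, zero mean and known finite variance, and $\log p_\nu,\log p_\omega$ are expressible using integer linear constraints. (A5) Observability: there exist $T$ and an incentive sequence such that the initial condition $(x_0,\theta_0)$ can be computed exactly from noiseless measurements on $0\le t\le T$. *)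

theory Defs
  imports "HOL-Analysis.Analysis" "HOL-Probability.Probability"
begin

definition vcat :: "real^'a \<Rightarrow> real^'b \<Rightarrow> real^('a + 'b)" where
  "vcat a b = (\<chi> i. case i of Inl j \<Rightarrow> a $ j | Inr j \<Rightarrow> b $ j)"

definition strict_concave_on :: "'a::real_vector set \<Rightarrow> ('a \<Rightarrow> real) \<Rightarrow> bool" where
  "strict_concave_on S f \<longleftrightarrow>
     (\<forall>x\<in>S. \<forall>y\<in>S. \<forall>t::real. x \<noteq> y \<and> 0 < t \<and> t < 1 \<longrightarrow>
        t * f x + (1 - t) * f y < f (t *\<^sub>R x + (1 - t) *\<^sub>R y))"

definition psd :: "real^'n^'n \<Rightarrow> bool" where
  "psd Q \<longleftrightarrow> (\<forall>v. 0 \<le> v \<bullet> (Q *v v))"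

definition milp_representable :: "'v set \<Rightarrow> ('v \<Rightarrow> real) set \<Rightarrow> bool" where
  "milp_representable V S \<longleftrightarrow> finite V \<and>
     (\<exists>(m::nat) (p::nat) (q::nat) (A::nat \<Rightarrow> 'v \<Rightarrow> real) (B::nat \<Rightarrow> nat \<Rightarrow> real)
        (E::nat \<Rightarrow> nat \<Rightarrow> real) (c::nat \<Rightarrow> real).
        S = {v. \<exists>(z::nat \<Rightarrow> real) (w::nat \<Rightarrow> int).
               \<forall>r<m. (\<Sum>k\<in>V. A r k * v k) + (\<Sum>j<p. B r j * z j)
                      + (\<Sum>j<q. E r j * real_of_int (w j)) \<le> c r})"

definition milp_set :: "(real^'n) set \<Rightarrow> bool" where
  "milp_set S \<longleftrightarrow> milp_representable (UNIV :: 'n set) (vec_nth ` S)"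

text \<open>Decision variables of the estimation problem: component i of x_t, u_t, theta_t, pi_t.\<close>
datatype ('nx, 'nu, 'nt, 'np) dvar =
    VX nat 'nx | VU nat 'nu | VT nat 'nt | VP nat 'np

definition traj_feasible ::
  "nat \<Rightarrow> (real^'nx \<Rightarrow> real^'nu \<Rightarrow> real^'nt \<Rightarrow> real^'np \<Rightarrow> real)
   \<Rightarrow> (real^'nx \<Rightarrow> real^'nu \<Rightarrow> real^'nx)
   \<Rightarrow> (real^'nx \<Rightarrow> real^'nu \<Rightarrow> real^'nt \<Rightarrow> real^'np \<Rightarrow> real^'nt)
   \<Rightarrow> (real^'nx) set \<Rightarrow> (real^'nu) set \<Rightarrow> (real^'nt) set \<Rightarrow> (real^'np) set
   \<Rightarrow> (nat \<Rightarrow> real^'nx) \<Rightarrow> (nat \<Rightarrow> real^'nu) \<Rightarrow> (nat \<Rightarrow> real^'nt) \<Rightarrow> (nat \<Rightarrow> real^'np)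
   \<Rightarrow> bool" where
  "traj_feasible N f h g X U Th P xs us ths ps \<longleftrightarrow>
     (\<forall>t\<le>N. xs t \<in> X \<and> ths t \<in> Th) \<and>
     (\<forall>t<N. ps t \<in> P \<and>
        us t \<in> U \<and>
        (\<forall>u\<in>U. f (h (xs t) u) u (ths t) (ps t) \<le> f (h (xs t) (us t)) (us t) (ths t) (ps t)) \<and>
        xs (Suc t) = h (xs t) (us t) \<and>
        ths (Suc t) = g (xs t) (us t) (ths t) (ps t))"

definition feasible_region ::
  "nat \<Rightarrow> (real^'nx \<Rightarrow> real^'nu \<Rightarrow> real^'nt \<Rightarrow> real^'np \<Rightarrow> real)
   \<Rightarrow> (real^'nx \<Rightarrow> real^'nu \<Rightarrow> real^'nx)
   \<Rightarrow> (real^'nx \<Rightarrow> real^'nu \<Rightarrow> real^'nt \<Rightarrow> real^'np \<Rightarrow> real^'nt)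
   \<Rightarrow> (real^'nx) set \<Rightarrow> (real^'nu) set \<Rightarrow> (real^'nt) set \<Rightarrow> (real^'np) set
   \<Rightarrow> (('nx, 'nu, 'nt, 'np) dvar \<Rightarrow> real) set" where
  "feasible_region N f h g X U Th P =
     {v. traj_feasible N f h g X U Th P
           (\<lambda>t. \<chi> i. v (VX t i)) (\<lambda>t. \<chi> i. v (VU t i))
           (\<lambda>t. \<chi> i. v (VT t i)) (\<lambda>t. \<chi> i. v (VP t i))}"

definition region_vars :: "nat \<Rightarrow> ('nx::finite, 'nu::finite, 'nt::finite, 'np::finite) dvar set" where
  "region_vars N =
     {VX t i | t i. t \<le> N} \<union> {VT t i | t i. t \<le> N} \<union>
     {VU t i | t i. t < N} \<union> {VP t i | t i. t < N}"

definition log_hypograph :: "(real^'n \<Rightarrow> real) \<Rightarrow> (real^('n + unit)) set" where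
  "log_hypograph p = {vcat e (\<chi> _. s) | e s. 0 < p e \<and> s \<le> ln (p e)}"

end

theory Submission
  imports Defs
begin

definition afff :: "'v set \<Rightarrow> (('v \<Rightarrow> real) \<Rightarrow> real) \<Rightarrow> bool" where
  "afff V e \<longleftrightarrow> (\<exists>A c. \<forall>v. e v = (\<Sum>k\<in>V. A k * v k) + c)"

lemma afff_var: "finite V \<Longrightarrow> k \<in> V \<Longrightarrow> afff V (\<lambda>v. v k)"
  unfolding afff_def
proof (rule exI[of _ "\<lambda>j. if j = k then 1 else 0"], rule exI[of _ 0], intro allI)
  fix v :: "'a \<Rightarrow> real"
  assume "finite V" "k \<in> V"
  have "(\<Sum>j\<in>V. (if j = k then 1 else 0) * v j) = (\<Sum>j\<in>V. if j = k then v j else 0)"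
    by (rule sum.cong) auto
  then show "v k = (\<Sum>j\<in>V. (if j = k then 1 else 0) * v j) + 0"
    using \<open>finite V\<close> \<open>k \<in> V\<close> by (simp add: sum.delta')
qed

lemma afff_const: "afff V (\<lambda>v. c)"
  unfolding afff_def by (rule exI[of _ "\<lambda>j. 0"], rule exI[of _ c]) simp

lemma afff_add: "afff V e1 \<Longrightarrow> afff V e2 \<Longrightarrow> afff V (\<lambda>v. e1 v + e2 v)"
  unfolding afff_def
proof (elim exE)
  fix A1 c1 A2 c2
  assume 1: "\<forall>v. e1 v = (\<Sum>k\<in>V. A1 k * v k) + c1" and 2: "\<forall>v. e2 v = (\<Sum>k\<in>V. A2 k * v k) + c2"
  show "\<exists>A c. \<forall>v. e1 v + e2 v = (\<Sum>k\<in>V. A k * v k) + c"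
    by (rule exI[of _ "\<lambda>k. A1 k + A2 k"], rule exI[of _ "c1+c2"])
       (simp add: 1 2 distrib_right sum.distrib)
qed

lemma afff_scale: "afff V e \<Longrightarrow> afff V (\<lambda>v. a * e v)"
  unfolding afff_def
proof (elim exE)
  fix A c
  assume 1: "\<forall>v. e v = (\<Sum>k\<in>V. A k * v k) + c"
  show "\<exists>A c. \<forall>v. a * e v = (\<Sum>k\<in>V. A k * v k) + c"
    by (rule exI[of _ "\<lambda>k. a * A k"], rule exI[of _ "a*c"])
       (simp add: 1 distrib_left sum_distrib_left mult.assoc)
qed

lemma afff_scale_r: "afff V e \<Longrightarrow> afff V (\<lambda>v. e v * a)"
  using afff_scale[of V e a] by (simp add: mult.commute)

lemma afff_neg: "afff V e \<Longrightarrow> afff V (\<lambda>v. - e v)"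
  using afff_scale[of V e "-1"] by simp

lemma afff_diff: "afff V e1 \<Longrightarrow> afff V e2 \<Longrightarrow> afff V (\<lambda>v. e1 v - e2 v)"
  using afff_add[of V e1 "\<lambda>v. - e2 v"] afff_neg[of V e2] by simp

lemma afff_sum: "finite I \<Longrightarrow> (\<And>i. i \<in> I \<Longrightarrow> afff V (e i)) \<Longrightarrow> afff V (\<lambda>v. \<Sum>i\<in>I. e i v)"
proof (induction I rule: finite_induct)
  case empty
  then show ?case by (simp add: afff_const)
next
  case (insert x F)
  then show ?case by (simp add: afff_add)
qed

lemma milp_intro:
  fixes R :: "'r set" and Zs :: "'z set" and Ws :: "'q set"
    and A :: "'r \<Rightarrow> 'v \<Rightarrow> real" and B :: "'r \<Rightarrow> 'z \<Rightarrow> real"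
    and E :: "'r \<Rightarrow> 'q \<Rightarrow> real" and c :: "'r \<Rightarrow> real"
  assumes fin: "finite V" "finite R" "finite Zs" "finite Ws"
  and S: "S = {v. \<exists>(z::'z\<Rightarrow>real) (w::'q\<Rightarrow>int). \<forall>r\<in>R. (\<Sum>k\<in>V. A r k * v k) + (\<Sum>j\<in>Zs. B r j * z j)
              + (\<Sum>j\<in>Ws. E r j * real_of_int (w j)) \<le> c r}"
  shows "milp_representable V S"
proof -
  obtain eR where eR: "bij_betw eR {0..<card R} R" using ex_bij_betw_nat_finite[OF fin(2)] by blast
  obtain eZ where eZ: "bij_betw eZ {0..<card Zs} Zs" using ex_bij_betw_nat_finite[OF fin(3)] by blast
  obtain eW where eW: "bij_betw eW {0..<card Ws} Ws" using ex_bij_betw_nat_finite[OF fin(4)] by blast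
  have sZ: "(\<Sum>j<card Zs. B r (eZ j) * z (eZ j)) = (\<Sum>j\<in>Zs. B r j * z j)" for r z
    using sum.reindex_bij_betw[OF eZ, of "\<lambda>j. B r j * z j"] by (simp add: atLeast0LessThan)
  have sW: "(\<Sum>j<card Ws. E r (eW j) * real_of_int (w (eW j))) = (\<Sum>j\<in>Ws. E r j * real_of_int (w j))" for r w
    using sum.reindex_bij_betw[OF eW, of "\<lambda>j. E r j * real_of_int (w j)"] by (simp add: atLeast0LessThan)
  let ?T = "{v. \<exists>(z::nat\<Rightarrow>real) (w::nat\<Rightarrow>int). \<forall>r<card R. (\<Sum>k\<in>V. A (eR r) k * v k)
              + (\<Sum>j<card Zs. B (eR r) (eZ j) * z j)
              + (\<Sum>j<card Ws. E (eR r) (eW j) * real_of_int (w j)) \<le> c (eR r)}"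
  have "S = ?T"
  proof (intro set_eqI iffI)
    fix v assume "v \<in> S"
    then obtain z w where H: "\<forall>r\<in>R. (\<Sum>k\<in>V. A r k * v k) + (\<Sum>j\<in>Zs. B r j * z j)
              + (\<Sum>j\<in>Ws. E r j * real_of_int (w j)) \<le> c r" using S by blast
    have "\<forall>r<card R. (\<Sum>k\<in>V. A (eR r) k * v k)
              + (\<Sum>j<card Zs. B (eR r) (eZ j) * (z \<circ> eZ) j)
              + (\<Sum>j<card Ws. E (eR r) (eW j) * real_of_int ((w \<circ> eW) j)) \<le> c (eR r)"
    proof (intro allI impI)
      fix r assume "r < card R"
      then have "eR r \<in> R" using eR by (auto simp: bij_betw_def)
      then show "(\<Sum>k\<in>V. A (eR r) k * v k)
              + (\<Sum>j<card Zs. B (eR r) (eZ j) * (z \<circ> eZ) j)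
              + (\<Sum>j<card Ws. E (eR r) (eW j) * real_of_int ((w \<circ> eW) j)) \<le> c (eR r)"
        using H sZ sW by simp
    qed
    then show "v \<in> ?T" by blast
  next
    fix v assume "v \<in> ?T"
    then obtain z w where H: "\<forall>r<card R. (\<Sum>k\<in>V. A (eR r) k * v k)
              + (\<Sum>j<card Zs. B (eR r) (eZ j) * z j)
              + (\<Sum>j<card Ws. E (eR r) (eW j) * real_of_int (w j)) \<le> c (eR r)" by blast
    define z' where "z' = z \<circ> inv_into {0..<card Zs} eZ"
    define w' where "w' = w \<circ> inv_into {0..<card Ws} eW"
    have z'e: "z' (eZ j) = z j" if "j < card Zs" for j
      using that eZ by (simp add: z'_def bij_betw_inv_into_left)
    have w'e: "w' (eW j) = w j" if "j < card Ws" for j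
      using that eW by (simp add: w'_def bij_betw_inv_into_left)
    have "\<forall>r\<in>R. (\<Sum>k\<in>V. A r k * v k) + (\<Sum>j\<in>Zs. B r j * z' j)
              + (\<Sum>j\<in>Ws. E r j * real_of_int (w' j)) \<le> c r"
    proof
      fix r assume "r \<in> R"
      define r' where "r' = inv_into {0..<card R} eR r"
      have "r' \<in> {0..<card R}" unfolding r'_def using \<open>r \<in> R\<close> eR
        by (metis bij_betw_def inv_into_into)
      moreover have "eR r' = r" unfolding r'_def using \<open>r \<in> R\<close> eR
        by (simp add: bij_betw_inv_into_right)
      ultimately have r': "r' < card R" "eR r' = r" by auto
      have e1: "(\<Sum>j<card Zs. B r (eZ j) * z j) = (\<Sum>j\<in>Zs. B r j * z' j)"
        by (subst sZ[symmetric]) (simp add: z'e)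
      have e2: "(\<Sum>j<card Ws. E r (eW j) * real_of_int (w j)) = (\<Sum>j\<in>Ws. E r j * real_of_int (w' j))"
        by (subst sW[symmetric]) (simp add: w'e)
      show "(\<Sum>k\<in>V. A r k * v k) + (\<Sum>j\<in>Zs. B r j * z' j)
              + (\<Sum>j\<in>Ws. E r j * real_of_int (w' j)) \<le> c r"
        using H r' e1 e2 by auto
    qed
    then show "v \<in> S" using S by blast
  qed
  then show ?thesis unfolding milp_representable_def using fin(1)
    apply (intro conjI, simp)
    apply (rule exI[of _ "card R"], rule exI[of _ "card Zs"], rule exI[of _ "card Ws"])
    apply (rule exI[of _ "\<lambda>r. A (eR r)"], rule exI[of _ "\<lambda>r j. B (eR r) (eZ j)"],
        rule exI[of _ "\<lambda>r j. E (eR r) (eW j)"], rule exI[of _ "\<lambda>r. c (eR r)"])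
    by simp
qed

lemma ball_Plus_iff: "(\<forall>r\<in>X <+> Y. P r) \<longleftrightarrow> (\<forall>r\<in>X. P (Inl r)) \<and> (\<forall>r\<in>Y. P (Inr r))"
  by auto

lemma milp_Int:
  assumes "milp_representable V S" "milp_representable V T"
  shows "milp_representable V (S \<inter> T)"
proof -
  from assms(1) obtain m1 p1 q1 A1 B1 E1 c1 where fin: "finite V" and S:
    "S = {v. \<exists>(z::nat\<Rightarrow>real) (w::nat\<Rightarrow>int). \<forall>r<(m1::nat). (\<Sum>k\<in>V. A1 r k * v k) + (\<Sum>j<p1. B1 r j * z j)
        + (\<Sum>j<q1. E1 r j * real_of_int (w j)) \<le> c1 r}"
    unfolding milp_representable_def by (elim conjE exE) (rule that; assumption)
  from assms(2) obtain m2 p2 q2 A2 B2 E2 c2 where T: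
    "T = {v. \<exists>(z::nat\<Rightarrow>real) (w::nat\<Rightarrow>int). \<forall>r<(m2::nat). (\<Sum>k\<in>V. A2 r k * v k) + (\<Sum>j<p2. B2 r j * z j)
        + (\<Sum>j<q2. E2 r j * real_of_int (w j)) \<le> c2 r}"
    unfolding milp_representable_def by (elim conjE exE) (rule that; assumption)
  define A where "A = (\<lambda>r k. case r of Inl r \<Rightarrow> A1 r k | Inr r \<Rightarrow> A2 r k)"
  define B where "B = (\<lambda>r j. case r of Inl r \<Rightarrow> (case j of Inl j \<Rightarrow> B1 r j | Inr j \<Rightarrow> 0)
                                | Inr r \<Rightarrow> (case j of Inl j \<Rightarrow> 0 | Inr j \<Rightarrow> B2 r j))"
  define E where "E = (\<lambda>r j. case r of Inl r \<Rightarrow> (case j of Inl j \<Rightarrow> E1 r j | Inr j \<Rightarrow> 0)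
                                | Inr r \<Rightarrow> (case j of Inl j \<Rightarrow> 0 | Inr j \<Rightarrow> E2 r j))"
  define c where "c = case_sum c1 c2"
  have hB1: "(\<Sum>j\<in>{..<p1}<+>{..<p2}. B (Inl r) j * z j) = (\<Sum>j<p1. B1 r j * z (Inl j))" for r z
    by (simp add: sum.Plus B_def)
  have hB2: "(\<Sum>j\<in>{..<p1}<+>{..<p2}. B (Inr r) j * z j) = (\<Sum>j<p2. B2 r j * z (Inr j))" for r z
    by (simp add: sum.Plus B_def)
  have hE1: "(\<Sum>j\<in>{..<q1}<+>{..<q2}. E (Inl r) j * real_of_int (w j)) = (\<Sum>j<q1. E1 r j * real_of_int (w (Inl j)))" for r w
    by (simp add: sum.Plus E_def)
  have hE2: "(\<Sum>j\<in>{..<q1}<+>{..<q2}. E (Inr r) j * real_of_int (w j)) = (\<Sum>j<q2. E2 r j * real_of_int (w (Inr j)))" for r w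
    by (simp add: sum.Plus E_def)
  have "S \<inter> T = {v. \<exists>(z::nat+nat\<Rightarrow>real) (w::nat+nat\<Rightarrow>int). \<forall>r\<in>{..<m1}<+>{..<m2}. (\<Sum>k\<in>V. A r k * v k)
      + (\<Sum>j\<in>{..<p1}<+>{..<p2}. B r j * z j) + (\<Sum>j\<in>{..<q1}<+>{..<q2}. E r j * real_of_int (w j)) \<le> c r}"
    (is "_ = ?R")
  proof (intro set_eqI iffI)
    fix v assume "v \<in> S \<inter> T"
    then obtain z1 w1 z2 w2 where
      H1: "\<forall>r<m1. (\<Sum>k\<in>V. A1 r k * v k) + (\<Sum>j<p1. B1 r j * z1 j) + (\<Sum>j<q1. E1 r j * real_of_int (w1 j)) \<le> c1 r"
      and H2: "\<forall>r<m2. (\<Sum>k\<in>V. A2 r k * v k) + (\<Sum>j<p2. B2 r j * z2 j) + (\<Sum>j<q2. E2 r j * real_of_int (w2 j)) \<le> c2 r"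
      using S T by blast
    show "v \<in> ?R"
      apply (simp only: mem_Collect_eq)
      apply (rule exI[of _ "case_sum z1 z2"], rule exI[of _ "case_sum w1 w2"])
      apply (simp only: ball_Plus_iff hB1 hB2 hE1 hE2)
      using H1 H2 by (simp add: A_def c_def)
  next
    fix v assume "v \<in> ?R"
    then obtain z w where H: "\<forall>r\<in>{..<m1}<+>{..<m2}. (\<Sum>k\<in>V. A r k * v k)
      + (\<Sum>j\<in>{..<p1}<+>{..<p2}. B r j * z j) + (\<Sum>j\<in>{..<q1}<+>{..<q2}. E r j * real_of_int (w j)) \<le> c r"
      by blast
    then have H1: "\<forall>r<m1. (\<Sum>k\<in>V. A1 r k * v k) + (\<Sum>j<p1. B1 r j * (z \<circ> Inl) j) + (\<Sum>j<q1. E1 r j * real_of_int ((w \<circ> Inl) j)) \<le> c1 r"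
      and H2: "\<forall>r<m2. (\<Sum>k\<in>V. A2 r k * v k) + (\<Sum>j<p2. B2 r j * (z \<circ> Inr) j) + (\<Sum>j<q2. E2 r j * real_of_int ((w \<circ> Inr) j)) \<le> c2 r"
      by (simp_all only: ball_Plus_iff hB1 hB2 hE1 hE2) (auto simp: A_def c_def)
    show "v \<in> S \<inter> T" using H1 H2 S T by blast
  qed
  then show ?thesis
    by (intro milp_intro[OF fin]) auto
qed

lemma milp_UNIV: "finite V \<Longrightarrow> milp_representable V UNIV"
  unfolding milp_representable_def
  by (intro conjI, simp) (rule exI[of _ 0], auto)

lemma milp_INT:
  assumes "finite V" "finite I" "\<And>i. i \<in> I \<Longrightarrow> milp_representable V (S i)"
  shows "milp_representable V (\<Inter>i\<in>I. S i)"
  using assms(2,3)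
proof (induction I rule: finite_induct)
  case empty
  then show ?case using milp_UNIV[OF assms(1)] by simp
next
  case (insert x F)
  then show ?case by (simp add: milp_Int)
qed

lemma milp_mono_vars:
  assumes "milp_representable V' S" "V' \<subseteq> V" "finite V"
  shows "milp_representable V S"
proof -
  from assms(1) obtain m p q A B E c where
    S: "S = {v. \<exists>(z::nat\<Rightarrow>real) (w::nat\<Rightarrow>int). \<forall>r<(m::nat). (\<Sum>k\<in>V'. A r k * v k) + (\<Sum>j<p. B r j * z j)
        + (\<Sum>j<q. E r j * real_of_int (w j)) \<le> c r}"
    unfolding milp_representable_def by (elim conjE exE) (rule that; assumption)
  have e: "(\<Sum>k\<in>V. (if k \<in> V' then A r k else 0) * v k) = (\<Sum>k\<in>V'. A r k * v k)" for r v
  proof -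
    have "(\<Sum>k\<in>V. (if k \<in> V' then A r k else 0) * v k) = (\<Sum>k\<in>V. if k \<in> V' then A r k * v k else 0)"
      by (rule sum.cong) auto
    also have "\<dots> = (\<Sum>k\<in>V \<inter> V'. A r k * v k)" by (simp add: sum.inter_restrict[OF assms(3)])
    also have "V \<inter> V' = V'" using assms(2) by blast
    finally show ?thesis .
  qed
  show ?thesis unfolding milp_representable_def
    apply (intro conjI, fact)
    apply (rule exI[of _ m], rule exI[of _ p], rule exI[of _ q])
    apply (rule exI[of _ "\<lambda>r k. if k \<in> V' then A r k else 0"])
    using S by (simp only: e) blast
qed

lemma afff_choice:
  assumes "\<forall>r\<in>R. afff V (e r)"
  shows "\<exists>A c. \<forall>r\<in>R. \<forall>v. e r v = (\<Sum>k\<in>V. A r k * v k) + c r"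
proof -
  from assms have "\<forall>r\<in>R. \<exists>Ac. \<forall>v. e r v = (\<Sum>k\<in>V. fst Ac k * v k) + snd Ac"
    unfolding afff_def by auto
  then obtain f where f: "\<forall>r\<in>R. \<forall>v. e r v = (\<Sum>k\<in>V. fst (f r) k * v k) + snd (f r)"
    by (metis bchoice)
  show ?thesis by (rule exI[of _ "\<lambda>r. fst (f r)"], rule exI[of _ "\<lambda>r. snd (f r)"]) (use f in auto)
qed

definition mlp :: "'v set \<Rightarrow> 'z set \<Rightarrow> 'q set \<Rightarrow> (('v\<Rightarrow>real) \<times> ('z\<Rightarrow>real) \<times> ('q\<Rightarrow>real)) set \<Rightarrow> bool" where
  "mlp V Z W T \<longleftrightarrow> (\<exists>(m::nat) e d g. (\<forall>r<m. afff V (e r) \<and> afff Z (d r) \<and> afff W (g r)) \<and>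
      T = {(v,z,w). \<forall>r<m. e r v + d r z + g r w \<le> 0})"

lemma all_less_add_iff: "(\<forall>r<m1+(m2::nat). P r) \<longleftrightarrow> (\<forall>r<m1. P r) \<and> (\<forall>r<m2. P (m1 + r))"
proof safe
  fix r assume "\<forall>r<m1. P r" "\<forall>r<m2. P (m1 + r)" "r < m1 + m2"
  then show "P r" by (cases "r < m1") (auto, metis add_diff_inverse_nat add_less_cancel_left)
qed auto

lemma mlp_Int:
  assumes "mlp V Z W T1" "mlp V Z W T2"
  shows "mlp V Z W (T1 \<inter> T2)"
proof -
  obtain m1 e1 d1 g1 where h1: "\<forall>r<(m1::nat). afff V (e1 r) \<and> afff Z (d1 r) \<and> afff W (g1 r)"
    and T1: "T1 = {(v,z,w). \<forall>r<m1. e1 r v + d1 r z + g1 r w \<le> 0}"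
    using assms(1) unfolding mlp_def by blast
  obtain m2 e2 d2 g2 where h2: "\<forall>r<(m2::nat). afff V (e2 r) \<and> afff Z (d2 r) \<and> afff W (g2 r)"
    and T2: "T2 = {(v,z,w). \<forall>r<m2. e2 r v + d2 r z + g2 r w \<le> 0}"
    using assms(2) unfolding mlp_def by blast
  define e where "e r = (if r < m1 then e1 r else e2 (r - m1))" for r
  define d where "d r = (if r < m1 then d1 r else d2 (r - m1))" for r
  define g where "g r = (if r < m1 then g1 r else g2 (r - m1))" for r
  have "\<forall>r<m1+m2. afff V (e r) \<and> afff Z (d r) \<and> afff W (g r)"
    unfolding all_less_add_iff using h1 h2 by (simp add: e_def d_def g_def)
  moreover have "T1 \<inter> T2 = {(v,z,w). \<forall>r<m1+m2. e r v + d r z + g r w \<le> 0}"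
    unfolding all_less_add_iff T1 T2 by (auto simp: e_def d_def g_def)
  ultimately show ?thesis unfolding mlp_def by blast
qed

lemma mlp_UNIV: "mlp V Z W UNIV"
  unfolding mlp_def by (rule exI[of _ 0]) auto

lemma mlp_le:
  assumes "afff V e" "afff Z d" "afff W g"
  shows "mlp V Z W {(v,z,w). e v + d z + g w \<le> 0}"
  unfolding mlp_def
  by (rule exI[of _ 1], rule exI[of _ "\<lambda>_. e"], rule exI[of _ "\<lambda>_. d"], rule exI[of _ "\<lambda>_. g"])
     (use assms in auto)

lemma mlp_ball:
  assumes "finite I" "\<And>i. i \<in> I \<Longrightarrow> mlp V Z W (T i)"
  shows "mlp V Z W {x. \<forall>i\<in>I. x \<in> T i}"
  using assms
proof (induction I rule: finite_induct)
  case empty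
  then show ?case using mlp_UNIV by simp
next
  case (insert x F)
  have "{xa. \<forall>i\<in>insert x F. xa \<in> T i} = T x \<inter> {xa. \<forall>i\<in>F. xa \<in> T i}" by auto
  then show ?case using insert by (simp add: mlp_Int)
qed

lemma milp_of_mlp:
  fixes T :: "(('v\<Rightarrow>real) \<times> ('z\<Rightarrow>real) \<times> ('q\<Rightarrow>real)) set"
  assumes "finite V" "finite Z" "finite W" "mlp V Z W T"
  shows "milp_representable V {v. \<exists>z (w::'q\<Rightarrow>int). (v, z, \<lambda>j. real_of_int (w j)) \<in> T}"
proof -
  obtain m e d g where h: "\<forall>r<(m::nat). afff V (e r) \<and> afff Z (d r) \<and> afff W (g r)"
    and T: "T = {(v,z,w). \<forall>r<m. e r v + d r z + g r w \<le> 0}"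
    using assms(4) unfolding mlp_def by blast
  obtain A ca where A: "\<forall>r\<in>{..<m}. \<forall>v. e r v = (\<Sum>k\<in>V. A r k * v k) + ca r"
    using afff_choice[of "{..<m}" V e] h by auto
  obtain B cb where B: "\<forall>r\<in>{..<m}. \<forall>v. d r v = (\<Sum>k\<in>Z. B r k * v k) + cb r"
    using afff_choice[of "{..<m}" Z d] h by auto
  obtain E cg where E: "\<forall>r\<in>{..<m}. \<forall>v. g r v = (\<Sum>k\<in>W. E r k * v k) + cg r"
    using afff_choice[of "{..<m}" W g] h by auto
  show ?thesis
  proof (rule milp_intro[where R="{..<m}" and Zs=Z and Ws=W and A=A and B=B and E=E
        and c="\<lambda>r. - (ca r + cb r + cg r)"])
    show "{v. \<exists>z (w::'q\<Rightarrow>int). (v, z, \<lambda>j. real_of_int (w j)) \<in> T} =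
      {v. \<exists>z w. \<forall>r\<in>{..<m}. (\<Sum>k\<in>V. A r k * v k) + (\<Sum>j\<in>Z. B r j * z j) +
           (\<Sum>j\<in>W. E r j * real_of_int (w j)) \<le> - (ca r + cb r + cg r)}"
    proof (intro set_eqI iffI)
      fix v assume "v \<in> {v. \<exists>z (w::'q\<Rightarrow>int). (v, z, \<lambda>j. real_of_int (w j)) \<in> T}"
      then obtain z and w :: "'q \<Rightarrow> int" where H: "\<forall>r<m. e r v + d r z + g r (\<lambda>j. real_of_int (w j)) \<le> 0"
        unfolding T by auto
      have "\<forall>r\<in>{..<m}. (\<Sum>k\<in>V. A r k * v k) + (\<Sum>j\<in>Z. B r j * z j) +
           (\<Sum>j\<in>W. E r j * real_of_int (w j)) \<le> - (ca r + cb r + cg r)"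
      proof
        fix r assume r: "r \<in> {..<m}"
        then have "e r v + d r z + g r (\<lambda>j. real_of_int (w j)) \<le> 0" using H by auto
        then show "(\<Sum>k\<in>V. A r k * v k) + (\<Sum>j\<in>Z. B r j * z j) +
           (\<Sum>j\<in>W. E r j * real_of_int (w j)) \<le> - (ca r + cb r + cg r)"
          using A B E r by auto
      qed
      then show "v \<in> {v. \<exists>z w. \<forall>r\<in>{..<m}. (\<Sum>k\<in>V. A r k * v k) + (\<Sum>j\<in>Z. B r j * z j) +
           (\<Sum>j\<in>W. E r j * real_of_int (w j)) \<le> - (ca r + cb r + cg r)}" by blast
    next
      fix v assume "v \<in> {v. \<exists>z w. \<forall>r\<in>{..<m}. (\<Sum>k\<in>V. A r k * v k) + (\<Sum>j\<in>Z. B r j * z j) +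
           (\<Sum>j\<in>W. E r j * real_of_int (w j)) \<le> - (ca r + cb r + cg r)}"
      then obtain z and w :: "'q \<Rightarrow> int" where H: "\<forall>r\<in>{..<m}. (\<Sum>k\<in>V. A r k * v k) + (\<Sum>j\<in>Z. B r j * z j) +
           (\<Sum>j\<in>W. E r j * real_of_int (w j)) \<le> - (ca r + cb r + cg r)" by blast
      have "\<forall>r<m. e r v + d r z + g r (\<lambda>j. real_of_int (w j)) \<le> 0"
      proof (intro allI impI)
        fix r assume r: "r < m"
        then have h: "(\<Sum>k\<in>V. A r k * v k) + (\<Sum>j\<in>Z. B r j * z j) +
           (\<Sum>j\<in>W. E r j * real_of_int (w j)) \<le> - (ca r + cb r + cg r)" using H by auto
        moreover have "e r v = (\<Sum>k\<in>V. A r k * v k) + ca r" "d r z = (\<Sum>j\<in>Z. B r j * z j) + cb r"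
          "g r (\<lambda>j. real_of_int (w j)) = (\<Sum>j\<in>W. E r j * real_of_int (w j)) + cg r"
          using A B E r by auto
        ultimately show "e r v + d r z + g r (\<lambda>j. real_of_int (w j)) \<le> 0" by linarith
      qed
      then show "v \<in> {v. \<exists>z (w::'q\<Rightarrow>int). (v, z, \<lambda>j. real_of_int (w j)) \<in> T}"
        unfolding T by blast
    qed
  qed (use assms in auto)
qed

definition lp :: "'v set \<Rightarrow> 'z set \<Rightarrow> (('v\<Rightarrow>real) \<times> ('z\<Rightarrow>real)) set \<Rightarrow> bool" where
  "lp V Z T \<longleftrightarrow> mlp V Z ({}::unit set) {(v,z,w). (v,z) \<in> T}"

lemma lp_Int: "lp V Z T1 \<Longrightarrow> lp V Z T2 \<Longrightarrow> lp V Z (T1 \<inter> T2)"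
  unfolding lp_def
proof -
  assume "mlp V Z ({}::unit set) {(v, z, w). (v, z) \<in> T1}" "mlp V Z ({}::unit set) {(v, z, w). (v, z) \<in> T2}"
  from mlp_Int[OF this] show "mlp V Z ({}::unit set) {(v, z, w). (v, z) \<in> T1 \<inter> T2}"
    by (simp add: Int_def case_prod_unfold)
qed

lemma lp_le:
  assumes "afff V e" "afff Z d"
  shows "lp V Z {(v,z). e v + d z \<le> 0}"
  unfolding lp_def using mlp_le[OF assms afff_const[of "{}::unit set" 0]] by simp

lemma lp_UNIV: "lp V Z UNIV"
proof -
  have "{(v, z, w). (v, z) \<in> (UNIV::(('a\<Rightarrow>real) \<times> ('b\<Rightarrow>real)) set)} = (UNIV :: (_ \<times> _ \<times> (unit\<Rightarrow>real)) set)"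
    by auto
  then show ?thesis unfolding lp_def using mlp_UNIV by metis
qed

lemma lp_ball:
  assumes "finite I" "\<And>i. i \<in> I \<Longrightarrow> lp V Z (T i)"
  shows "lp V Z {x. \<forall>i\<in>I. x \<in> T i}"
  using assms
proof (induction I rule: finite_induct)
  case empty
  then show ?case using lp_UNIV by simp
next
  case (insert x F)
  have "{xa. \<forall>i\<in>insert x F. xa \<in> T i} = T x \<inter> {xa. \<forall>i\<in>F. xa \<in> T i}" by auto
  then show ?case using insert by (simp add: lp_Int)
qed

lemma milp_of_lp:
  assumes "finite V" "finite Z" "lp V Z T"
  shows "milp_representable V {v. \<exists>z. (v, z) \<in> T}"
  using milp_of_mlp[OF assms(1,2) finite.emptyI assms(3)[unfolded lp_def]] by simp

lemma lp_coeffs: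
  assumes "lp V Z T"
  shows "\<exists>m A D c. T = {(v,z). \<forall>r<(m::nat). (\<Sum>k\<in>V. A r k * v k) + (\<Sum>j\<in>Z. D r j * z j) + c r \<le> 0}"
proof -
  obtain m e d g where h: "\<forall>r<(m::nat). afff V (e r) \<and> afff Z (d r) \<and> afff ({}::unit set) (g r)"
    and T: "{(v,z,w). (v,z) \<in> T} = {(v,z,w). \<forall>r<m. e r v + d r z + g r w \<le> 0}"
    using assms unfolding lp_def mlp_def by blast
  obtain A ca where A: "\<forall>r\<in>{..<m}. \<forall>v. e r v = (\<Sum>k\<in>V. A r k * v k) + ca r"
    using afff_choice[of "{..<m}" V e] h by auto
  obtain B cb where B: "\<forall>r\<in>{..<m}. \<forall>v. d r v = (\<Sum>k\<in>Z. B r k * v k) + cb r"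
    using afff_choice[of "{..<m}" Z d] h by auto
  obtain E cg where E: "\<forall>r\<in>{..<m}. \<forall>v. g r v = (\<Sum>k\<in>({}::unit set). E r k * v k) + cg r"
    using afff_choice[of "{..<m}" "{}::unit set" g] h by auto
  have "T = {(v,z). \<forall>r<m. (\<Sum>k\<in>V. A r k * v k) + (\<Sum>j\<in>Z. B r j * z j) + (ca r + cb r + cg r) \<le> 0}"
  proof (intro set_eqI iffI)
    fix x assume "x \<in> T"
    obtain v z where x: "x = (v,z)" by force
    have H: "\<forall>r<m. e r v + d r z + g r (\<lambda>_. 0) \<le> 0"
      using T[THEN eqset_imp_iff, of "(v,z,\<lambda>_. 0)"] \<open>x \<in> T\<close> x by simp
    show "x \<in> {(v,z). \<forall>r<m. (\<Sum>k\<in>V. A r k * v k) + (\<Sum>j\<in>Z. B r j * z j) + (ca r + cb r + cg r) \<le> 0}"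
      unfolding x using H A B E by (auto simp: algebra_simps)
  next
    fix x assume "x \<in> {(v,z). \<forall>r<m. (\<Sum>k\<in>V. A r k * v k) + (\<Sum>j\<in>Z. B r j * z j) + (ca r + cb r + cg r) \<le> 0}"
    moreover obtain v z where x: "x = (v,z)" by force
    ultimately have H: "\<forall>r<m. (\<Sum>k\<in>V. A r k * v k) + (\<Sum>j\<in>Z. B r j * z j) + (ca r + cb r + cg r) \<le> 0" by simp
    have "\<forall>r<m. e r v + d r z + g r (\<lambda>_. 0) \<le> 0" using H A B E by (auto simp: algebra_simps)
    then show "x \<in> T" using T[THEN eqset_imp_iff, of "(v,z,\<lambda>_. 0)"] x by simp
  qed
  then show ?thesis
    by (intro exI[of _ m] exI[of _ A] exI[of _ B] exI[of _ "\<lambda>r. ca r + cb r + cg r"])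
qed

lemma recession_zero:
  fixes y :: "'v \<Rightarrow> real" and u :: "'z \<Rightarrow> real"
  assumes T: "T = {(v,z). \<forall>r<(m::nat). (\<Sum>k\<in>V. A r k * v k) + (\<Sum>j\<in>Z. D r j * z j) + c r \<le> 0}"
    and mem: "(v0, z0) \<in> T"
    and bnd: "\<forall>v z. (v,z) \<in> T \<longrightarrow> (\<forall>k\<in>V. \<bar>v k\<bar> \<le> M)"
    and rec: "\<forall>r<m. (\<Sum>k\<in>V. A r k * y k) + (\<Sum>j\<in>Z. D r j * u j) \<le> 0"
    and k: "k \<in> V"
  shows "y k = 0"
proof (rule ccontr)
  assume ne: "y k \<noteq> 0"
  have memt: "((\<lambda>k. v0 k + t * y k), (\<lambda>j. z0 j + t * u j)) \<in> T" if t: "t \<ge> 0" for t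
  proof -
    have "\<forall>r<m. (\<Sum>k\<in>V. A r k * (v0 k + t * y k)) + (\<Sum>j\<in>Z. D r j * (z0 j + t * u j)) + c r \<le> 0"
    proof (intro allI impI)
      fix r assume r: "r < m"
      have h0: "(\<Sum>k\<in>V. A r k * v0 k) + (\<Sum>j\<in>Z. D r j * z0 j) + c r \<le> 0" using mem r T by auto
      have h1: "t * ((\<Sum>k\<in>V. A r k * y k) + (\<Sum>j\<in>Z. D r j * u j)) \<le> 0"
        using rec r t by (simp add: mult_nonneg_nonpos)
      have "(\<Sum>k\<in>V. A r k * (v0 k + t * y k)) + (\<Sum>j\<in>Z. D r j * (z0 j + t * u j)) + c r
          = ((\<Sum>k\<in>V. A r k * v0 k) + (\<Sum>j\<in>Z. D r j * z0 j) + c r)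
            + t * ((\<Sum>k\<in>V. A r k * y k) + (\<Sum>j\<in>Z. D r j * u j))"
        by (simp add: algebra_simps sum.distrib sum_distrib_left)
      then show "(\<Sum>k\<in>V. A r k * (v0 k + t * y k)) + (\<Sum>j\<in>Z. D r j * (z0 j + t * u j)) + c r \<le> 0"
        using h0 h1 by linarith
    qed
    then show ?thesis using T by simp
  qed
  define t where "t = (M + \<bar>v0 k\<bar> + 1) / \<bar>y k\<bar>"
  have M0: "M \<ge> 0" using bnd mem k by force
  have tpos: "t \<ge> 0" unfolding t_def using M0 by simp
  have "t * \<bar>y k\<bar> = M + \<bar>v0 k\<bar> + 1" unfolding t_def using ne by simp
  moreover have "\<bar>v0 k + t * y k\<bar> \<le> M" using bnd memt[OF tpos] k by blast
  moreover have "\<bar>t * y k\<bar> = t * \<bar>y k\<bar>" using tpos by (simp add: abs_mult)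
  ultimately show False by linarith
qed

lemma milp_union:
  fixes T :: "'i \<Rightarrow> (('v\<Rightarrow>real) \<times> ('z\<Rightarrow>real)) set"
  assumes finV: "finite V" and finZ: "finite Z" and finI: "finite I"
    and lpT: "\<And>i. i \<in> I \<Longrightarrow> lp V Z (T i)"
    and bndT: "\<And>i. i \<in> I \<Longrightarrow> \<exists>M. \<forall>v z. (v,z) \<in> T i \<longrightarrow> (\<forall>k\<in>V. \<bar>v k\<bar> \<le> M)"
  shows "milp_representable V (\<Union>i\<in>I. {v. \<exists>z. (v,z) \<in> T i})"
proof -
  define I' where "I' = {i\<in>I. T i \<noteq> {}}"
  have finI': "finite I'" using finI by (simp add: I'_def)
  have U: "(\<Union>i\<in>I. {v. \<exists>z. (v,z) \<in> T i}) = (\<Union>i\<in>I'. {v. \<exists>z. (v,z) \<in> T i})"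
    unfolding I'_def by auto
  have "\<forall>i\<in>I'. \<exists>x. T i = {(v,z). \<forall>r<(fst x::nat). (\<Sum>k\<in>V. fst (snd x) r k * v k)
       + (\<Sum>j\<in>Z. fst (snd (snd x)) r j * z j) + snd (snd (snd x)) r \<le> 0}"
  proof
    fix i assume "i \<in> I'"
    then have "lp V Z (T i)" using lpT unfolding I'_def by blast
    then obtain m A D c where "T i = {(v,z). \<forall>r<(m::nat). (\<Sum>k\<in>V. A r k * v k) + (\<Sum>j\<in>Z. D r j * z j) + c r \<le> 0}"
      using lp_coeffs by blast
    then show "\<exists>x. T i = {(v,z). \<forall>r<(fst x::nat). (\<Sum>k\<in>V. fst (snd x) r k * v k)
       + (\<Sum>j\<in>Z. fst (snd (snd x)) r j * z j) + snd (snd (snd x)) r \<le> 0}"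
      by (intro exI[of _ "(m,A,D,c)"]) simp
  qed
  from bchoice[OF this] obtain f where f: "\<forall>i\<in>I'. T i = {(v,z). \<forall>r<(fst (f i)::nat). (\<Sum>k\<in>V. fst (snd (f i)) r k * v k)
       + (\<Sum>j\<in>Z. fst (snd (snd (f i))) r j * z j) + snd (snd (snd (f i))) r \<le> 0}" by blast
  define m where "m i = fst (f i)" for i
  define A where "A i = fst (snd (f i))" for i
  define D where "D i = fst (snd (snd (f i)))" for i
  define c where "c i = snd (snd (snd (f i)))" for i
  have sys: "\<forall>i\<in>I'. T i = {(v,z). \<forall>r<(m i::nat). (\<Sum>k\<in>V. A i r k * v k)
       + (\<Sum>j\<in>Z. D i r j * z j) + c i r \<le> 0}"
    using f unfolding m_def A_def D_def c_def by blast
  have "\<forall>i\<in>I'. \<exists>M. \<forall>v z. (v,z) \<in> T i \<longrightarrow> (\<forall>k\<in>V. \<bar>v k\<bar> \<le> M)"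
    using bndT unfolding I'_def by blast
  from bchoice[OF this] obtain Mb where Mb: "\<forall>i\<in>I'. \<forall>v z. (v,z) \<in> T i \<longrightarrow> (\<forall>k\<in>V. \<bar>v k\<bar> \<le> Mb i)"
    by blast
  define ZZ where "ZZ = (I' \<times> V) <+> (I' \<times> Z)"
  have finZZ: "finite ZZ" unfolding ZZ_def using finI' finV finZ by simp
  have inl: "Inl (i,k) \<in> ZZ" if "i \<in> I'" "k \<in> V" for i k unfolding ZZ_def using that by blast
  have inr: "Inr (i,j) \<in> ZZ" if "i \<in> I'" "j \<in> Z" for i j unfolding ZZ_def using that by blast
  define R1 where "R1 k = {(v::'v\<Rightarrow>real, zz::('i\<times>'v)+('i\<times>'z)\<Rightarrow>real, w::'i\<Rightarrow>real).
     v k + (- (\<Sum>i\<in>I'. zz (Inl (i,k)))) + 0 \<le> 0}" for k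
  define R2 where "R2 k = {(v::'v\<Rightarrow>real, zz::('i\<times>'v)+('i\<times>'z)\<Rightarrow>real, w::'i\<Rightarrow>real).
     - v k + (\<Sum>i\<in>I'. zz (Inl (i,k))) + 0 \<le> 0}" for k
  define R3 where "R3 i r = {(v::'v\<Rightarrow>real, zz::('i\<times>'v)+('i\<times>'z)\<Rightarrow>real, w::'i\<Rightarrow>real).
     0 + ((\<Sum>k\<in>V. A i r k * zz (Inl (i,k))) + (\<Sum>j\<in>Z. D i r j * zz (Inr (i,j)))) + c i r * w i \<le> 0}" for i r
  define R4 where "R4 i = {(v::'v\<Rightarrow>real, zz::('i\<times>'v)+('i\<times>'z)\<Rightarrow>real, w::'i\<Rightarrow>real).
     0 + 0 + (w i - 1) \<le> 0}" for i
  define R5 where "R5 i = {(v::'v\<Rightarrow>real, zz::('i\<times>'v)+('i\<times>'z)\<Rightarrow>real, w::'i\<Rightarrow>real).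
     0 + 0 + (- w i) \<le> 0}" for i
  define R6 where "R6 = {(v::'v\<Rightarrow>real, zz::('i\<times>'v)+('i\<times>'z)\<Rightarrow>real, w::'i\<Rightarrow>real).
     0 + 0 + ((\<Sum>i\<in>I'. w i) - 1) \<le> 0}"
  define R7 where "R7 = {(v::'v\<Rightarrow>real, zz::('i\<times>'v)+('i\<times>'z)\<Rightarrow>real, w::'i\<Rightarrow>real).
     0 + 0 + (1 - (\<Sum>i\<in>I'. w i)) \<le> 0}"
  define TB where "TB = {x. \<forall>k\<in>V. x \<in> R1 k} \<inter> {x. \<forall>k\<in>V. x \<in> R2 k}
     \<inter> {x. \<forall>i\<in>I'. x \<in> {x. \<forall>r\<in>{..<m i}. x \<in> R3 i r}} \<inter> {x. \<forall>i\<in>I'. x \<in> R4 i}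
     \<inter> {x. \<forall>i\<in>I'. x \<in> R5 i} \<inter> R6 \<inter> R7"
  have mTB: "mlp V ZZ I' TB"
  proof -
    have a1: "mlp V ZZ I' (R1 k)" if "k \<in> V" for k unfolding R1_def
      using that inl finI' by (intro mlp_le afff_var afff_neg afff_sum afff_const finV finZZ) auto
    have a2: "mlp V ZZ I' (R2 k)" if "k \<in> V" for k unfolding R2_def
      using that inl finI' by (intro mlp_le afff_var afff_neg afff_sum afff_const finV finZZ) auto
    have a3: "mlp V ZZ I' (R3 i r)" if "i \<in> I'" for i r unfolding R3_def
      using that inl inr finV finZ finZZ finI'
      by (intro mlp_le afff_add afff_var afff_neg afff_sum afff_const afff_scale) auto
    have a4: "mlp V ZZ I' (R4 i)" if "i \<in> I'" for i unfolding R4_def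
      using that finI' by (intro mlp_le afff_diff afff_var afff_const) auto
    have a5: "mlp V ZZ I' (R5 i)" if "i \<in> I'" for i unfolding R5_def
      using that finI' by (intro mlp_le afff_neg afff_var afff_const) auto
    have a6: "mlp V ZZ I' R6" unfolding R6_def
      using finI' by (intro mlp_le afff_diff afff_sum afff_var afff_const) auto
    have a7: "mlp V ZZ I' R7" unfolding R7_def
      using finI' by (intro mlp_le afff_diff afff_sum afff_var afff_const) auto
    show ?thesis unfolding TB_def
      by (intro mlp_Int mlp_ball finV finI' a1 a2 a3 a4 a5 a6 a7 finite_lessThan) auto
  qed
  have M: "milp_representable V {v. \<exists>zz (w::'i\<Rightarrow>int). (v, zz, \<lambda>j. real_of_int (w j)) \<in> TB}"
    by (rule milp_of_mlp[OF finV finZZ finI' mTB])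
  have EQ: "{v. \<exists>zz (w::'i\<Rightarrow>int). (v, zz, \<lambda>j. real_of_int (w j)) \<in> TB} = (\<Union>i\<in>I'. {v. \<exists>z. (v,z) \<in> T i})"
  proof (intro set_eqI iffI)
    fix v assume "v \<in> (\<Union>i\<in>I'. {v. \<exists>z. (v,z) \<in> T i})"
    then obtain i0 z where i0: "i0 \<in> I'" and vz: "(v,z) \<in> T i0" by blast
    define zz where "zz x = (case x of Inl (i,k) \<Rightarrow> if i = i0 then v k else 0
        | Inr (i,j) \<Rightarrow> if i = i0 then z j else 0)" for x
    define w :: "'i \<Rightarrow> int" where "w i = (if i = i0 then 1 else 0)" for i
    have s1: "(\<Sum>i\<in>I'. zz (Inl (i,k))) = v k" for k
      using i0 finI' by (simp add: zz_def)
    have "(\<Sum>i\<in>I'. real_of_int (w i)) = (\<Sum>i\<in>I'. if i = i0 then 1 else 0)"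
      by (rule sum.cong) (auto simp: w_def)
    also have "\<dots> = 1" using i0 finI' by simp
    finally have s2: "(\<Sum>i\<in>I'. real_of_int (w i)) = 1" .
    have rows: "\<forall>r<m i0. (\<Sum>k\<in>V. A i0 r k * v k) + (\<Sum>j\<in>Z. D i0 r j * z j) + c i0 r \<le> 0"
      using vz sys i0 by auto
    have "(v, zz, \<lambda>j. real_of_int (w j)) \<in> TB"
      unfolding TB_def R1_def R2_def R3_def R4_def R5_def R6_def R7_def
      using rows s1 s2 by (auto simp: zz_def w_def)
    then show "v \<in> {v. \<exists>zz (w::'i\<Rightarrow>int). (v, zz, \<lambda>j. real_of_int (w j)) \<in> TB}" by blast
  next
    fix v assume "v \<in> {v. \<exists>zz (w::'i\<Rightarrow>int). (v, zz, \<lambda>j. real_of_int (w j)) \<in> TB}"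
    then obtain zz and w :: "'i \<Rightarrow> int" where H: "(v, zz, \<lambda>j. real_of_int (w j)) \<in> TB" by blast
    have e1: "\<forall>k\<in>V. v k = (\<Sum>i\<in>I'. zz (Inl (i,k)))"
      using H unfolding TB_def R1_def R2_def by force
    have e3: "\<forall>i\<in>I'. \<forall>r<m i. (\<Sum>k\<in>V. A i r k * zz (Inl (i,k))) + (\<Sum>j\<in>Z. D i r j * zz (Inr (i,j)))
        + c i r * real_of_int (w i) \<le> 0"
      using H unfolding TB_def R3_def by auto
    have e45: "\<forall>i\<in>I'. w i = 0 \<or> w i = 1"
    proof
      fix i assume "i \<in> I'"
      then have "real_of_int (w i) \<le> 1" "real_of_int (w i) \<ge> 0"
        using H unfolding TB_def R4_def R5_def by auto
      then show "w i = 0 \<or> w i = 1" by linarith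
    qed
    have e67: "(\<Sum>i\<in>I'. real_of_int (w i)) = 1"
      using H unfolding TB_def R6_def R7_def by auto
    obtain i0 where i0: "i0 \<in> I'" "w i0 = 1"
    proof (rule ccontr)
      assume "\<not> thesis"
      then have "\<forall>i\<in>I'. w i = 0" using that e45 by blast
      then have "(\<Sum>i\<in>I'. real_of_int (w i)) = 0" by simp
      then show False using e67 by simp
    qed
    have oth: "w i = 0" if "i \<in> I'" "i \<noteq> i0" for i
    proof -
      have "(\<Sum>i\<in>I'. real_of_int (w i)) = real_of_int (w i0) + (\<Sum>i\<in>I' - {i0}. real_of_int (w i))"
        using i0 finI' by (simp add: sum.remove)
      moreover have "real_of_int (w i) \<le> (\<Sum>i\<in>I' - {i0}. real_of_int (w i))"
        using that finI' e45 by (intro member_le_sum) auto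
      ultimately have "real_of_int (w i) \<le> 0" using e67 i0 by simp
      then show ?thesis using e45 that by force
    qed
    have zero: "zz (Inl (i,k)) = 0" if ii: "i \<in> I'" and ne: "i \<noteq> i0" and kk: "k \<in> V" for i k
    proof -
      obtain v0 z0 where p0: "(v0,z0) \<in> T i" using ii unfolding I'_def by auto
      show ?thesis
      proof (rule recession_zero[where T="T i" and y="\<lambda>k. zz (Inl (i,k))" and u="\<lambda>j. zz (Inr (i,j))"])
        show "T i = {(v,z). \<forall>r<m i. (\<Sum>k\<in>V. A i r k * v k) + (\<Sum>j\<in>Z. D i r j * z j) + c i r \<le> 0}"
          using sys ii by auto
        show "(v0,z0) \<in> T i" by (fact p0)
        show "\<forall>v z. (v,z) \<in> T i \<longrightarrow> (\<forall>k\<in>V. \<bar>v k\<bar> \<le> Mb i)" using Mb ii by auto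
        show "\<forall>r<m i. (\<Sum>k\<in>V. A i r k * zz (Inl (i,k))) + (\<Sum>j\<in>Z. D i r j * zz (Inr (i,j))) \<le> 0"
          using e3 ii ne oth by auto
        show "k \<in> V" by (fact kk)
      qed
    qed
    have vk: "v k = zz (Inl (i0,k))" if "k \<in> V" for k
    proof -
      have "(\<Sum>i\<in>I'. zz (Inl (i,k))) = zz (Inl (i0,k)) + (\<Sum>i\<in>I' - {i0}. zz (Inl (i,k)))"
        using i0 finI' by (simp add: sum.remove)
      also have "(\<Sum>i\<in>I' - {i0}. zz (Inl (i,k))) = 0"
        using zero that by (intro sum.neutral) auto
      finally show ?thesis using e1 that by simp
    qed
    have "\<forall>r<m i0. (\<Sum>k\<in>V. A i0 r k * v k) + (\<Sum>j\<in>Z. D i0 r j * zz (Inr (i0,j))) + c i0 r \<le> 0"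
    proof (intro allI impI)
      fix r assume r: "r < m i0"
      have "(\<Sum>k\<in>V. A i0 r k * v k) = (\<Sum>k\<in>V. A i0 r k * zz (Inl (i0,k)))"
        using vk by (intro sum.cong) auto
      then show "(\<Sum>k\<in>V. A i0 r k * v k) + (\<Sum>j\<in>Z. D i0 r j * zz (Inr (i0,j))) + c i0 r \<le> 0"
        using e3 i0 r by auto
    qed
    then have "(v, \<lambda>j. zz (Inr (i0,j))) \<in> T i0" using sys i0 by auto
    then show "v \<in> (\<Union>i\<in>I'. {v. \<exists>z. (v,z) \<in> T i})" using i0 by blast
  qed
  show ?thesis using M unfolding U EQ[symmetric] .
qed

lemma representer:
  fixes f :: "'e::euclidean_space \<Rightarrow> real"
  assumes "linear f"
  shows "f x = (\<Sum>b\<in>Basis. f b *\<^sub>R b) \<bullet> x"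
proof -
  have "f x = f (\<Sum>b\<in>Basis. (x \<bullet> b) *\<^sub>R b)" by (simp add: euclidean_representation)
  also have "\<dots> = (\<Sum>b\<in>Basis. (x \<bullet> b) * f b)"
    using assms by (simp add: linear_sum linear_scale)
  also have "\<dots> = (\<Sum>b\<in>Basis. f b *\<^sub>R b) \<bullet> x"
    by (simp add: inner_sum_left mult.commute inner_commute[of x])
  finally show ?thesis .
qed

lemma sum_in_convex_cone:
  assumes "convex_cone K" "finite I" "\<And>i. i \<in> I \<Longrightarrow> f i \<in> K"
  shows "(\<Sum>i\<in>I. f i) \<in> K"
  using assms(2,3)
proof (induction I rule: finite_induct)
  case empty
  then show ?case using assms(1) by (simp add: convex_cone_iff)
next
  case (insert x F)
  then show ?case using assms(1) by (simp add: convex_cone_iff)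
qed

lemma farkas_indexed:
  fixes w :: "'i \<Rightarrow> 'a::euclidean_space"
  assumes finI: "finite I"
  shows "(\<exists>c. (\<forall>i\<in>I. c i \<ge> 0) \<and> g = (\<Sum>i\<in>I. c i *\<^sub>R w i)) \<or> (\<exists>d. (\<forall>i\<in>I. d \<bullet> w i \<le> 0) \<and> d \<bullet> g > 0)"
proof -
  define C where "C = {y. \<exists>c. (\<forall>i\<in>I. c i \<ge> 0) \<and> y = (\<Sum>i\<in>I. c i *\<^sub>R w i)}"
  have ccC: "convex_cone C"
    unfolding convex_cone_iff
  proof (intro conjI ballI allI impI)
    show "0 \<in> C" unfolding C_def by (rule CollectI, rule exI[of _ "\<lambda>_. 0"]) simp
  next
    fix x y assume "x \<in> C" "y \<in> C"
    then obtain c c' where "\<forall>i\<in>I. c i \<ge> 0" "x = (\<Sum>i\<in>I. c i *\<^sub>R w i)"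
      "\<forall>i\<in>I. c' i \<ge> 0" "y = (\<Sum>i\<in>I. c' i *\<^sub>R w i)" unfolding C_def by blast
    then show "x + y \<in> C" unfolding C_def
      by (intro CollectI exI[of _ "\<lambda>i. c i + c' i"]) (simp add: scaleR_add_left sum.distrib)
  next
    fix x :: 'a and t :: real assume "x \<in> C" "0 \<le> t"
    then obtain c where "\<forall>i\<in>I. c i \<ge> 0" "x = (\<Sum>i\<in>I. c i *\<^sub>R w i)" unfolding C_def by blast
    then show "t *\<^sub>R x \<in> C" using \<open>0 \<le> t\<close> unfolding C_def
      by (intro CollectI exI[of _ "\<lambda>i. t * c i"]) (simp add: scaleR_sum_right)
  qed
  have sub1: "w ` I \<subseteq> C"
  proof
    fix y assume "y \<in> w ` I"
    then obtain i where i: "i \<in> I" "y = w i" by blast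
    have "(\<Sum>j\<in>I. (if j = i then 1 else 0) *\<^sub>R w j) = (\<Sum>j\<in>I. if j = i then w j else 0)"
      by (rule sum.cong) auto
    also have "\<dots> = w i" using i finI by simp
    finally show "y \<in> C" unfolding C_def using i
      by (intro CollectI exI[of _ "\<lambda>j. if j = i then 1 else 0"]) auto
  qed
  have "C \<subseteq> convex_cone hull (w ` I)"
  proof
    fix y assume "y \<in> C"
    then obtain c where c: "\<forall>i\<in>I. c i \<ge> 0" "y = (\<Sum>i\<in>I. c i *\<^sub>R w i)" unfolding C_def by blast
    show "y \<in> convex_cone hull (w ` I)" unfolding c(2)
      by (rule sum_in_convex_cone[OF convex_cone_convex_cone_hull finI])
         (use c(1) in \<open>auto intro: convex_cone_hull_mul hull_inc\<close>)
  qed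
  moreover have "convex_cone hull (w ` I) \<subseteq> C"
    by (rule hull_minimal[where S=convex_cone, OF sub1 ccC])
  ultimately have Ceq: "C = convex_cone hull (w ` I)" by blast
  have clC: "closed C" unfolding Ceq
    using polyhedron_convex_cone_hull[of "w ` I"] finI polyhedron_imp_closed by blast
  have cvC: "convex C" using ccC by (simp add: convex_cone_def)
  show ?thesis
  proof (cases "g \<in> C")
    case True
    then show ?thesis unfolding C_def by blast
  next
    case False
    obtain a b where ab: "a \<bullet> g < b" "\<forall>x\<in>C. b < a \<bullet> x"
      using separating_hyperplane_closed_point[OF cvC clC False] by blast
    have "0 \<in> C" using ccC by (simp add: convex_cone_iff)
    then have b0: "b < 0" using ab by force
    have "a \<bullet> w i \<ge> 0" if i: "i \<in> I" for i
    proof (rule ccontr)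
      assume neg: "\<not> 0 \<le> a \<bullet> w i"
      define t where "t = b / (a \<bullet> w i)"
      have t0: "t \<ge> 0" unfolding t_def using neg b0 by (simp add: divide_nonpos_neg)
      have "t *\<^sub>R w i \<in> C" using sub1 i ccC t0 by (auto simp: convex_cone_iff)
      then have "b < a \<bullet> (t *\<^sub>R w i)" using ab by blast
      moreover have "a \<bullet> (t *\<^sub>R w i) = b" unfolding t_def using neg by simp
      ultimately show False by simp
    qed
    then have "(\<forall>i\<in>I. (- a) \<bullet> w i \<le> 0) \<and> (- a) \<bullet> g > 0" using ab b0 by auto
    then show ?thesis by blast
  qed
qed


lemma kkt_suff:
  fixes Phi0 :: "'e::euclidean_space \<Rightarrow> real" and Dq :: "'e \<Rightarrow> 'e \<Rightarrow> real" and Bq :: "'e \<Rightarrow> real"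
    and ell :: "'s \<Rightarrow> 'e \<Rightarrow> real" and ll :: "'s \<Rightarrow> 'e \<Rightarrow> real"
    and R :: "('e \<times> real) set" and S :: "'s set" and us :: 'e
  assumes finR: "finite R" and finS: "finite S" and neS: "S \<noteq> {}"
    and expand: "\<And>u d. Phi0 (u + d) = Phi0 u + Dq u d - Bq d"
    and linDq: "\<And>u. linear (Dq u)"
    and Bq_nn: "\<And>d. Bq d \<ge> 0"
    and ellx: "\<And>\<sigma> u d. ell \<sigma> (u + d) = ell \<sigma> u + ll \<sigma> d"
    and linll: "\<And>\<sigma>. linear (ll \<sigma>)"
    and IR: "I \<subseteq> R" and AS: "A \<subseteq> S"
    and lam: "\<forall>r\<in>I. lam r \<ge> 0 \<and> fst r \<bullet> us = snd r"
    and mu: "\<forall>\<sigma>\<in>A. mu \<sigma> \<ge> 0 \<and> ell \<sigma> us = s"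
    and sle: "\<forall>\<sigma>\<in>S. s \<le> ell \<sigma> us"
    and mu1: "(\<Sum>\<sigma>\<in>A. mu \<sigma>) = 1"
    and stat: "\<forall>b\<in>Basis. Dq us b + (\<Sum>\<sigma>\<in>A. mu \<sigma> * ll \<sigma> b) = (\<Sum>r\<in>I. lam r * (fst r \<bullet> b))"
    and uf: "\<forall>r\<in>R. fst r \<bullet> u \<le> snd r"
  shows "Phi0 u + Min ((\<lambda>\<sigma>. ell \<sigma> u) ` S) \<le> Phi0 us + Min ((\<lambda>\<sigma>. ell \<sigma> us) ` S)"
proof -
  have finI: "finite I" using finR IR finite_subset by blast
  have finA: "finite A" using finS AS finite_subset by blast
  define d where "d = u - us"
  have u: "u = us + d" unfolding d_def by simp
  define f where "f x = Dq us x + (\<Sum>\<sigma>\<in>A. mu \<sigma> * ll \<sigma> x)" for x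
  define g where "g x = (\<Sum>r\<in>I. lam r * (fst r \<bullet> x))" for x
  have lf: "linear f"
    by (rule linearI)
       (simp_all add: f_def linear_add[OF linDq] linear_scale[OF linDq] linear_add[OF linll]
         linear_scale[OF linll] sum.distrib sum_distrib_left algebra_simps)
  have lg: "linear g"
    by (rule linearI)
       (simp_all add: g_def inner_add_right sum.distrib sum_distrib_left algebra_simps)
  have "f = g" by (rule linear_eq_stdbasis[OF lf lg]) (use stat in \<open>simp add: f_def g_def\<close>)
  then have fg: "f d = g d" by simp
  have gneg: "g d \<le> 0" unfolding g_def
  proof (rule sum_nonpos)
    fix r assume r: "r \<in> I"
    then have "fst r \<bullet> d \<le> 0" using uf lam IR unfolding d_def by (auto simp: inner_diff_right)
    then show "lam r * (fst r \<bullet> d) \<le> 0" using lam r by (simp add: mult_nonneg_nonpos)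
  qed
  have "A \<noteq> {}" using mu1 by auto
  then obtain \<sigma>0 where s0: "\<sigma>0 \<in> A" by blast
  have Mus: "Min ((\<lambda>\<sigma>. ell \<sigma> us) ` S) = s"
    by (rule Min_eqI) (use finS sle mu s0 AS in auto)
  have Mu_le: "Min ((\<lambda>\<sigma>. ell \<sigma> u) ` S) \<le> (\<Sum>\<sigma>\<in>A. mu \<sigma> * ell \<sigma> u)"
  proof -
    have "Min ((\<lambda>\<sigma>. ell \<sigma> u) ` S) = (\<Sum>\<sigma>\<in>A. mu \<sigma> * Min ((\<lambda>\<sigma>. ell \<sigma> u) ` S))"
      by (simp add: sum_distrib_right[symmetric] mu1)
    also have "\<dots> \<le> (\<Sum>\<sigma>\<in>A. mu \<sigma> * ell \<sigma> u)"
    proof (rule sum_mono)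
      fix \<sigma> assume "\<sigma> \<in> A"
      then have "Min ((\<lambda>\<sigma>. ell \<sigma> u) ` S) \<le> ell \<sigma> u" using AS finS by (intro Min_le) auto
      then show "mu \<sigma> * Min ((\<lambda>\<sigma>. ell \<sigma> u) ` S) \<le> mu \<sigma> * ell \<sigma> u"
        using mu \<open>\<sigma> \<in> A\<close> by (simp add: mult_left_mono)
    qed
    finally show ?thesis .
  qed
  have "(\<Sum>\<sigma>\<in>A. mu \<sigma> * ell \<sigma> u) = (\<Sum>\<sigma>\<in>A. mu \<sigma> * s + mu \<sigma> * ll \<sigma> d)"
  proof (rule sum.cong)
    fix \<sigma> assume "\<sigma> \<in> A"
    have "ell \<sigma> u = ell \<sigma> us + ll \<sigma> d" unfolding u by (rule ellx)
    then show "mu \<sigma> * ell \<sigma> u = mu \<sigma> * s + mu \<sigma> * ll \<sigma> d" using mu \<open>\<sigma> \<in> A\<close> by (simp add: algebra_simps)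
  qed simp
  also have "\<dots> = s + (\<Sum>\<sigma>\<in>A. mu \<sigma> * ll \<sigma> d)"
    by (simp add: sum.distrib sum_distrib_right[symmetric] mu1)
  finally have Msum: "(\<Sum>\<sigma>\<in>A. mu \<sigma> * ell \<sigma> u) = s + (\<Sum>\<sigma>\<in>A. mu \<sigma> * ll \<sigma> d)" .
  have "Phi0 u = Phi0 us + Dq us d - Bq d" unfolding u by (rule expand)
  then show ?thesis using Mus Mu_le Msum fg gneg Bq_nn[of d] unfolding f_def by linarith
qed


lemma kkt_nec:
  fixes Phi0 :: "'e::euclidean_space \<Rightarrow> real" and Dq :: "'e \<Rightarrow> 'e \<Rightarrow> real" and Bq :: "'e \<Rightarrow> real"
    and ell :: "'s \<Rightarrow> 'e \<Rightarrow> real" and ll :: "'s \<Rightarrow> 'e \<Rightarrow> real"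
    and R :: "('e \<times> real) set" and S :: "'s set" and us :: 'e
  assumes finR: "finite R" and finS: "finite S" and neS: "S \<noteq> {}"
    and expand: "\<And>u d. Phi0 (u + d) = Phi0 u + Dq u d - Bq d"
    and linDq: "\<And>u. linear (Dq u)"
    and Bq_sc: "\<And>t d. Bq (t *\<^sub>R d) = t^2 * Bq d"
    and Bq_nn: "\<And>d. Bq d \<ge> 0"
    and ellx: "\<And>\<sigma> u d. ell \<sigma> (u + d) = ell \<sigma> u + ll \<sigma> d"
    and linll: "\<And>\<sigma>. linear (ll \<sigma>)"
    and usf: "\<forall>r\<in>R. fst r \<bullet> us \<le> snd r"
    and opt: "\<forall>u. (\<forall>r\<in>R. fst r \<bullet> u \<le> snd r) \<longrightarrow>
        Phi0 u + Min ((\<lambda>\<sigma>. ell \<sigma> u) ` S) \<le> Phi0 us + Min ((\<lambda>\<sigma>. ell \<sigma> us) ` S)"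
  shows "\<exists>I A lam mu s. I \<subseteq> R \<and> A \<subseteq> S \<and> (\<forall>r\<in>I. lam r \<ge> 0 \<and> fst r \<bullet> us = snd r)
      \<and> (\<forall>\<sigma>\<in>A. mu \<sigma> \<ge> 0 \<and> ell \<sigma> us = s) \<and> (\<forall>\<sigma>\<in>S. s \<le> ell \<sigma> us) \<and> (\<Sum>\<sigma>\<in>A. mu \<sigma>) = 1
      \<and> (\<forall>b\<in>Basis. Dq us b + (\<Sum>\<sigma>\<in>A. mu \<sigma> * ll \<sigma> b) = (\<Sum>r\<in>I. lam r * (fst r \<bullet> b)))"
proof -
  define sst where "sst = Min ((\<lambda>\<sigma>. ell \<sigma> us) ` S)"
  define I where "I = {r\<in>R. fst r \<bullet> us = snd r}"
  define A where "A = {\<sigma>\<in>S. ell \<sigma> us = sst}"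
  have finI: "finite I" using finR by (simp add: I_def)
  have finA: "finite A" using finS by (simp add: A_def)
  have sle: "\<forall>\<sigma>\<in>S. sst \<le> ell \<sigma> us" unfolding sst_def using finS by auto
  define gl where "gl \<sigma> = (\<Sum>b\<in>Basis. ll \<sigma> b *\<^sub>R b)" for \<sigma>
  define gD where "gD = (\<Sum>b\<in>Basis. Dq us b *\<^sub>R b)"
  have repl: "ll \<sigma> x = gl \<sigma> \<bullet> x" for \<sigma> x unfolding gl_def by (rule representer[OF linll])
  have repD: "Dq us x = gD \<bullet> x" for x unfolding gD_def by (rule representer[OF linDq])
  define w :: "('e \<times> real) + 's \<Rightarrow> 'e \<times> real" where
    "w i = (case i of Inl r \<Rightarrow> (fst r, 0) | Inr \<sigma> \<Rightarrow> (- gl \<sigma>, 1))" for i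
  from farkas_indexed[of "I <+> A" "(gD, 1::real)" w] finI finA
  consider (F1) c where "\<forall>i\<in>I <+> A. c i \<ge> 0" "(gD, 1::real) = (\<Sum>i\<in>I <+> A. c i *\<^sub>R w i)"
    | (F2) d where "\<forall>i\<in>I <+> A. d \<bullet> w i \<le> 0" "d \<bullet> (gD, 1::real) > 0"
    by auto
  then show ?thesis
  proof cases
    case F1
    define lam where "lam r = c (Inl r)" for r
    define mu where "mu \<sigma> = c (Inr \<sigma>)" for \<sigma>
    have eq: "(gD, 1::real) = (\<Sum>r\<in>I. lam r *\<^sub>R (fst r, 0)) + (\<Sum>\<sigma>\<in>A. mu \<sigma> *\<^sub>R (- gl \<sigma>, 1))"
      using F1(2) finI finA by (simp add: sum.Plus w_def lam_def mu_def comp_def)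
    have e1: "gD = (\<Sum>r\<in>I. lam r *\<^sub>R fst r) - (\<Sum>\<sigma>\<in>A. mu \<sigma> *\<^sub>R gl \<sigma>)"
      using arg_cong[OF eq, of fst] by (simp add: fst_sum sum_negf)
    have e2: "(\<Sum>\<sigma>\<in>A. mu \<sigma>) = 1"
      using arg_cong[OF eq, of snd] by (simp add: snd_sum)
    have stat: "\<forall>b\<in>Basis. Dq us b + (\<Sum>\<sigma>\<in>A. mu \<sigma> * ll \<sigma> b) = (\<Sum>r\<in>I. lam r * (fst r \<bullet> b))"
    proof
      fix b :: 'e
      have "Dq us b = gD \<bullet> b" by (rule repD)
      also have "\<dots> = (\<Sum>r\<in>I. lam r * (fst r \<bullet> b)) - (\<Sum>\<sigma>\<in>A. mu \<sigma> * ll \<sigma> b)"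
        unfolding e1 by (simp add: inner_diff_left inner_sum_left repl)
      finally show "Dq us b + (\<Sum>\<sigma>\<in>A. mu \<sigma> * ll \<sigma> b) = (\<Sum>r\<in>I. lam r * (fst r \<bullet> b))" by simp
    qed
    show ?thesis
      apply (rule exI[of _ I], rule exI[of _ A], rule exI[of _ lam], rule exI[of _ mu], rule exI[of _ sst])
      using F1(1) e2 stat sle unfolding I_def A_def lam_def mu_def by auto
  next
    case F2
    define du where "du = fst d"
    define ds where "ds = snd d"
    have dI: "fst r \<bullet> du \<le> 0" if "r \<in> I" for r
    proof -
      have "d \<bullet> w (Inl r) \<le> 0" using F2(1) that by auto
      then show ?thesis unfolding w_def du_def by (cases d) (simp add: inner_commute)
    qed
    have dA: "ds \<le> ll \<sigma> du" if "\<sigma> \<in> A" for \<sigma>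
    proof -
      have "d \<bullet> w (Inr \<sigma>) \<le> 0" using F2(1) that by auto
      then have "- (du \<bullet> gl \<sigma>) + ds \<le> 0" unfolding w_def du_def ds_def
        by (cases d) simp
      then show ?thesis by (simp add: repl inner_commute)
    qed
    define q where "q = Dq us du + ds"
    have q0: "q > 0" using F2(2) unfolding q_def du_def ds_def repD by (cases d) (simp add: inner_commute)
    define Ts where "Ts = insert 1 (insert (q / (Bq du + 1))
        ((\<lambda>r. (snd r - fst r \<bullet> us) / (\<bar>fst r \<bullet> du\<bar> + 1)) ` (R - I) \<union>
         (\<lambda>\<sigma>. (ell \<sigma> us - sst) / (\<bar>ds - ll \<sigma> du\<bar> + 1)) ` (S - A)))"
    have finTs: "finite Ts" unfolding Ts_def using finR finS by simp
    have posTs: "\<forall>x\<in>Ts. x > 0"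
    proof -
      have "(snd r - fst r \<bullet> us) / (\<bar>fst r \<bullet> du\<bar> + 1) > 0" if "r \<in> R - I" for r
      proof -
        have "fst r \<bullet> us < snd r" using that usf unfolding I_def by force
        then show ?thesis by (simp add: add_pos_nonneg)
      qed
      moreover have "(ell \<sigma> us - sst) / (\<bar>ds - ll \<sigma> du\<bar> + 1) > 0" if "\<sigma> \<in> S - A" for \<sigma>
      proof -
        have "sst < ell \<sigma> us" using that sle unfolding A_def by force
        then show ?thesis by (simp add: add_pos_nonneg)
      qed
      moreover have "q / (Bq du + 1) > 0" using q0 Bq_nn[of du] by simp
      ultimately show ?thesis unfolding Ts_def by auto
    qed
    define t where "t = Min Ts"
    have t0: "t > 0" unfolding t_def using finTs posTs by (simp add: Ts_def)
    have tle: "t \<le> x" if "x \<in> Ts" for x unfolding t_def using finTs that by simp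
    define ut where "ut = us + t *\<^sub>R du"
    have feas: "\<forall>r\<in>R. fst r \<bullet> ut \<le> snd r"
    proof
      fix r assume r: "r \<in> R"
      show "fst r \<bullet> ut \<le> snd r"
      proof (cases "r \<in> I")
        case True
        then have "fst r \<bullet> ut = snd r + t * (fst r \<bullet> du)" unfolding ut_def I_def
          by (simp add: inner_add_right)
        moreover have "t * (fst r \<bullet> du) \<le> 0" using dI[OF True] t0 by (simp add: mult_nonneg_nonpos)
        ultimately show ?thesis by simp
      next
        case False
        have "t \<le> (snd r - fst r \<bullet> us) / (\<bar>fst r \<bullet> du\<bar> + 1)"
          using tle r False unfolding Ts_def by auto
        then have "t * (\<bar>fst r \<bullet> du\<bar> + 1) \<le> snd r - fst r \<bullet> us"
          by (simp add: pos_le_divide_eq add_pos_nonneg)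
        moreover have "t * (fst r \<bullet> du) \<le> t * (\<bar>fst r \<bullet> du\<bar> + 1)"
          using t0 by (intro mult_left_mono) auto
        moreover have "fst r \<bullet> ut = fst r \<bullet> us + t * (fst r \<bullet> du)" unfolding ut_def
          by (simp add: inner_add_right)
        ultimately show ?thesis by linarith
      qed
    qed
    have ellut: "ell \<sigma> ut = ell \<sigma> us + t * ll \<sigma> du" for \<sigma>
      unfolding ut_def ellx by (simp add: linear_scale[OF linll])
    have Mge: "sst + t * ds \<le> Min ((\<lambda>\<sigma>. ell \<sigma> ut) ` S)"
    proof (rule Min.boundedI)
      show "finite ((\<lambda>\<sigma>. ell \<sigma> ut) ` S)" using finS by simp
      show "(\<lambda>\<sigma>. ell \<sigma> ut) ` S \<noteq> {}" using neS by simp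
    next
      fix y assume "y \<in> (\<lambda>\<sigma>. ell \<sigma> ut) ` S"
      then obtain \<sigma> where \<sigma>: "\<sigma> \<in> S" "y = ell \<sigma> ut" by blast
      show "sst + t * ds \<le> y"
      proof (cases "\<sigma> \<in> A")
        case True
        then have "ell \<sigma> us = sst" unfolding A_def by simp
        moreover have "t * ds \<le> t * ll \<sigma> du" using dA[OF True] t0 by (simp add: mult_left_mono)
        ultimately show ?thesis using \<sigma> ellut by simp
      next
        case False
        have "t \<le> (ell \<sigma> us - sst) / (\<bar>ds - ll \<sigma> du\<bar> + 1)"
          using tle \<sigma> False unfolding Ts_def by auto
        then have "t * (\<bar>ds - ll \<sigma> du\<bar> + 1) \<le> ell \<sigma> us - sst"
          by (simp add: pos_le_divide_eq add_pos_nonneg)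
        moreover have "t * (ds - ll \<sigma> du) \<le> t * (\<bar>ds - ll \<sigma> du\<bar> + 1)"
          using t0 by (intro mult_left_mono) auto
        ultimately show ?thesis using \<sigma> ellut by (simp add: algebra_simps)
      qed
    qed
    have Phit: "Phi0 ut = Phi0 us + t * Dq us du - t^2 * Bq du"
      unfolding ut_def expand by (simp add: linear_scale[OF linDq] Bq_sc)
    have tq: "t \<le> q / (Bq du + 1)" using tle unfolding Ts_def by simp
    then have "t * (Bq du + 1) \<le> q" using Bq_nn[of du] by (simp add: pos_le_divide_eq add_pos_nonneg)
    then have "t * Bq du < q" using t0 by (simp add: algebra_simps)
    then have "t * (t * Bq du) < t * q" using t0 by simp
    then have "Phi0 us + sst < Phi0 ut + Min ((\<lambda>\<sigma>. ell \<sigma> ut) ` S)"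
      using Phit Mge unfolding q_def by (simp add: power2_eq_square algebra_simps)
    moreover have "Phi0 ut + Min ((\<lambda>\<sigma>. ell \<sigma> ut) ` S) \<le> Phi0 us + sst"
      using opt feas unfolding sst_def by blast
    ultimately show ?thesis by simp
  qed
qed

lemma afff_inner_l:
  assumes "finite V" "\<And>i. afff V (\<lambda>v. e v $ i)"
  shows "afff V (\<lambda>v. (a::real^'n) \<bullet> e v)"
  unfolding inner_vec_def using assms
  by (auto intro!: afff_sum afff_scale)

lemma afff_inner_r:
  assumes "finite V" "\<And>i. afff V (\<lambda>v. e v $ i)"
  shows "afff V (\<lambda>v. e v \<bullet> (a::real^'n))"
  using afff_inner_l[OF assms, of a] by (simp add: inner_commute)

lemma afff_mv:
  assumes "finite V" "\<And>j. afff V (\<lambda>v. e v $ j)"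
  shows "afff V (\<lambda>v. ((M::real^'n^'m) *v e v) $ i)"
  unfolding matrix_vector_mult_def using assms
  by (auto intro!: afff_sum afff_scale)

lemma vcat_nth: "vcat a b $ i = (case i of Inl j \<Rightarrow> a $ j | Inr j \<Rightarrow> b $ j)"
  by (simp add: vcat_def)

lemma afff_vcat:
  assumes "\<And>j. afff V (\<lambda>v. a v $ j)" "\<And>j. afff V (\<lambda>v. b v $ j)"
  shows "afff V (\<lambda>v. vcat (a v) (b v) $ i)"
  using assms by (cases i) (auto simp: vcat_nth)

lemma afff_vadd:
  assumes "\<And>j. afff V (\<lambda>v. a v $ j)" "\<And>j. afff V (\<lambda>v. b v $ j)"
  shows "afff V (\<lambda>v. (a v + b v) $ i)"
  using assms by (simp add: afff_add)

lemma afff_vconst: "afff V (\<lambda>v. (c::real^'n) $ i)"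
  by (rule afff_const)

lemma afff_vvar:
  assumes "finite V" "\<And>i. k i \<in> V"
  shows "afff V (\<lambda>v. (\<chi> i. v (k i)) $ j)"
  using assms by (simp add: afff_var)

lemma vcat_add: "vcat (a + b) (c + d) = vcat a c + vcat b d"
  by (simp add: vcat_def vec_eq_iff split: sum.splits)

lemma vcat_scale: "vcat (t *\<^sub>R a) (t *\<^sub>R b) = t *\<^sub>R vcat a b"
  by (simp add: vcat_def vec_eq_iff split: sum.splits)

lemma vcat_zero: "vcat 0 0 = 0"
  by (simp add: vcat_def vec_eq_iff split: sum.splits)

lemma sum_Min_PiE:
  fixes f :: "nat \<Rightarrow> nat \<Rightarrow> real"
  assumes "finite K" "\<And>i. i \<in> K \<Longrightarrow> finite (J i) \<and> J i \<noteq> {}"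
  shows "(\<Sum>i\<in>K. Min (f i ` J i)) = Min ((\<lambda>\<sigma>. \<Sum>i\<in>K. f i (\<sigma> i)) ` PiE K J)"
proof -
  have "\<forall>i\<in>K. \<exists>j. j \<in> J i \<and> f i j = Min (f i ` J i)"
  proof
    fix i assume "i \<in> K"
    then have "Min (f i ` J i) \<in> f i ` J i" using assms(2) by (intro Min_in) auto
    then show "\<exists>j. j \<in> J i \<and> f i j = Min (f i ` J i)" by force
  qed
  from bchoice[OF this] obtain s0 where s0: "\<forall>i\<in>K. s0 i \<in> J i \<and> f i (s0 i) = Min (f i ` J i)" by blast
  define \<sigma>0 where "\<sigma>0 i = (if i \<in> K then s0 i else undefined)" for i
  have \<sigma>0: "\<sigma>0 \<in> PiE K J" using s0 unfolding \<sigma>0_def by (auto simp: PiE_def extensional_def)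
  show ?thesis
  proof (rule Min_eqI[symmetric])
    show "finite ((\<lambda>\<sigma>. \<Sum>i\<in>K. f i (\<sigma> i)) ` PiE K J)" using assms by (simp add: finite_PiE)
  next
    fix y assume "y \<in> (\<lambda>\<sigma>. \<Sum>i\<in>K. f i (\<sigma> i)) ` PiE K J"
    then obtain \<sigma> where \<sigma>: "\<sigma> \<in> PiE K J" "y = (\<Sum>i\<in>K. f i (\<sigma> i))" by blast
    show "(\<Sum>i\<in>K. Min (f i ` J i)) \<le> y" unfolding \<sigma>(2)
    proof (rule sum_mono)
      fix i assume "i \<in> K"
      then show "Min (f i ` J i) \<le> f i (\<sigma> i)" using assms(2) \<sigma>(1) by (intro Min_le) (auto simp: PiE_def Pi_def)
    qed
  next
    have "(\<Sum>i\<in>K. f i (\<sigma>0 i)) = (\<Sum>i\<in>K. Min (f i ` J i))"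
      using s0 by (intro sum.cong) (auto simp: \<sigma>0_def)
    then show "(\<Sum>i\<in>K. Min (f i ` J i)) \<in> (\<lambda>\<sigma>. \<Sum>i\<in>K. f i (\<sigma> i)) ` PiE K J"
      using \<sigma>0 by force
  qed
qed

definition zof :: "real^'nx^'nx \<Rightarrow> real^'nu^'nx \<Rightarrow> real^'nx \<Rightarrow> real^'nx \<Rightarrow> real^'nu \<Rightarrow> real^('nx+'nu)" where
  "zof Ah Bh kh x u = vcat (Ah *v x + Bh *v u + kh) u"

definition zl :: "real^'nu^'nx \<Rightarrow> real^'nu \<Rightarrow> real^('nx+'nu)" where
  "zl Bh d = vcat (Bh *v d) d"

lemma zof_add: "zof Ah Bh kh x (u + d) = zof Ah Bh kh x u + zl Bh d"
  unfolding zof_def zl_def by (simp add: vcat_add[symmetric] matrix_vector_right_distrib algebra_simps)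

lemma zl_add: "zl Bh (a + b) = zl Bh a + zl Bh b"
  unfolding zl_def by (simp add: vcat_add[symmetric] matrix_vector_right_distrib)

lemma zl_scale: "zl Bh (t *\<^sub>R a) = t *\<^sub>R zl Bh a"
  unfolding zl_def by (simp add: vcat_scale[symmetric] matrix_vector_mult_scaleR)

lemma argmax_kkt:
  fixes Q :: "real^('nx::finite+'nu::finite)^('nx+'nu)" and H :: "real^('nx+'nu)^('nt::finite+'np::finite)"
    and Ah :: "real^'nx^'nx" and Bh :: "real^'nu^'nx" and kh :: "real^'nx"
    and F :: "nat \<Rightarrow> nat \<Rightarrow> real^(('nx + 'nu) + ('nt + 'np))" and \<zeta> :: "nat \<Rightarrow> nat \<Rightarrow> real"
    and J :: "nat \<Rightarrow> nat set" and K :: nat and RU :: "((real^'nu) \<times> real) set"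
    and x :: "real^'nx" and \<theta> :: "real^'nt" and \<pi> :: "real^'np" and us :: "real^'nu"
  assumes psdQ: "psd Q" and finRU: "finite RU"
    and J: "\<And>i. i \<in> {1..K} \<Longrightarrow> finite (J i) \<and> J i \<noteq> {}"
    and usf: "\<forall>r\<in>RU. fst r \<bullet> us \<le> snd r"
  shows "(\<forall>u. (\<forall>r\<in>RU. fst r \<bullet> u \<le> snd r) \<longrightarrow>
      - (zof Ah Bh kh x u \<bullet> (Q *v zof Ah Bh kh x u)) + vcat \<theta> \<pi> \<bullet> (H *v zof Ah Bh kh x u)
        + (\<Sum>i\<in>{1..K}. Min ((\<lambda>j. F i j \<bullet> vcat (zof Ah Bh kh x u) (vcat \<theta> \<pi>) + \<zeta> i j) ` J i))
      \<le> - (zof Ah Bh kh x us \<bullet> (Q *v zof Ah Bh kh x us)) + vcat \<theta> \<pi> \<bullet> (H *v zof Ah Bh kh x us)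
        + (\<Sum>i\<in>{1..K}. Min ((\<lambda>j. F i j \<bullet> vcat (zof Ah Bh kh x us) (vcat \<theta> \<pi>) + \<zeta> i j) ` J i)))
   \<longleftrightarrow> (\<exists>I A lam mu s. I \<subseteq> RU \<and> A \<subseteq> PiE {1..K} J \<and> (\<forall>r\<in>I. lam r \<ge> 0 \<and> fst r \<bullet> us = snd r)
      \<and> (\<forall>\<sigma>\<in>A. mu \<sigma> \<ge> 0 \<and> (\<Sum>i\<in>{1..K}. F i (\<sigma> i) \<bullet> vcat (zof Ah Bh kh x us) (vcat \<theta> \<pi>) + \<zeta> i (\<sigma> i)) = s)
      \<and> (\<forall>\<sigma>\<in>PiE {1..K} J. s \<le> (\<Sum>i\<in>{1..K}. F i (\<sigma> i) \<bullet> vcat (zof Ah Bh kh x us) (vcat \<theta> \<pi>) + \<zeta> i (\<sigma> i)))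
      \<and> (\<Sum>\<sigma>\<in>A. mu \<sigma>) = 1
      \<and> (\<forall>b\<in>Basis. (- (zof Ah Bh kh x us \<bullet> (Q *v zl Bh b)) - (zl Bh b \<bullet> (Q *v zof Ah Bh kh x us))
              + vcat \<theta> \<pi> \<bullet> (H *v zl Bh b))
          + (\<Sum>\<sigma>\<in>A. mu \<sigma> * (\<Sum>i\<in>{1..K}. F i (\<sigma> i) \<bullet> vcat (zl Bh b) 0))
          = (\<Sum>r\<in>I. lam r * (fst r \<bullet> b))))"
proof -
  define z where "z u = zof Ah Bh kh x u" for u
  define p where "p = vcat \<theta> \<pi>"
  define Phi0 where "Phi0 u = - (z u \<bullet> (Q *v z u)) + p \<bullet> (H *v z u)" for u
  define Dq where "Dq u d = - (z u \<bullet> (Q *v zl Bh d)) - (zl Bh d \<bullet> (Q *v z u)) + p \<bullet> (H *v zl Bh d)" for u d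
  define Bq where "Bq d = zl Bh d \<bullet> (Q *v zl Bh d)" for d
  define S where "S = PiE {1..K} J"
  define ell where "ell \<sigma> u = (\<Sum>i\<in>{1..K}. F i (\<sigma> i) \<bullet> vcat (z u) p + \<zeta> i (\<sigma> i))" for \<sigma> u
  define ll where "ll \<sigma> d = (\<Sum>i\<in>{1..K}. F i (\<sigma> i) \<bullet> vcat (zl Bh d) 0)" for \<sigma> d
  have finS: "finite S" unfolding S_def using J by (intro finite_PiE) auto
  have neS: "S \<noteq> {}" unfolding S_def using J by (simp add: PiE_eq_empty_iff)
  have expand: "Phi0 (u + d) = Phi0 u + Dq u d - Bq d" for u d
    unfolding Phi0_def Dq_def Bq_def z_def zof_add
    by (simp add: matrix_vector_right_distrib inner_add_left inner_add_right algebra_simps)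
  have linDq: "linear (Dq u)" for u
    by (rule linearI)
       (simp_all add: Dq_def zl_add zl_scale matrix_vector_right_distrib matrix_vector_mult_scaleR
         inner_add_left inner_add_right algebra_simps)
  have Bq_nn: "Bq d \<ge> 0" for d unfolding Bq_def using psdQ by (simp add: psd_def)
  have Bq_sc: "Bq (t *\<^sub>R d) = t^2 * Bq d" for t d
    unfolding Bq_def zl_scale by (simp add: matrix_vector_mult_scaleR power2_eq_square)
  have ellx: "ell \<sigma> (u + d) = ell \<sigma> u + ll \<sigma> d" for \<sigma> u d
  proof -
    have "vcat (z (u + d)) p = vcat (z u) p + vcat (zl Bh d) 0"
      unfolding z_def zof_add by (simp add: vcat_add[symmetric])
    then show ?thesis unfolding ell_def ll_def by (simp add: inner_add_right sum.distrib algebra_simps)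
  qed
  have linll: "linear (ll \<sigma>)" for \<sigma>
  proof (rule linearI)
    fix a b :: "real^'nu"
    have "vcat (zl Bh (a + b)) (0::real^('nt+'np)) = vcat (zl Bh a) 0 + vcat (zl Bh b) 0"
      by (simp add: zl_add vcat_add[symmetric])
    then show "ll \<sigma> (a + b) = ll \<sigma> a + ll \<sigma> b" unfolding ll_def
      by (simp add: inner_add_right sum.distrib)
  next
    fix c :: real and a :: "real^'nu"
    have "vcat (zl Bh (c *\<^sub>R a)) (0::real^('nt+'np)) = c *\<^sub>R vcat (zl Bh a) 0"
      by (simp add: zl_scale vcat_scale[symmetric])
    then show "ll \<sigma> (c *\<^sub>R a) = c *\<^sub>R ll \<sigma> a" unfolding ll_def
      by (simp add: sum_distrib_left)
  qed
  have fo: "- (z u \<bullet> (Q *v z u)) + p \<bullet> (H *v z u)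
        + (\<Sum>i\<in>{1..K}. Min ((\<lambda>j. F i j \<bullet> vcat (z u) p + \<zeta> i j) ` J i))
      = Phi0 u + Min ((\<lambda>\<sigma>. ell \<sigma> u) ` S)" for u
    unfolding Phi0_def ell_def S_def
    using sum_Min_PiE[of "{1..K}" J "\<lambda>i j. F i j \<bullet> vcat (z u) p + \<zeta> i j"] J by simp
  have "(\<forall>u. (\<forall>r\<in>RU. fst r \<bullet> u \<le> snd r) \<longrightarrow> Phi0 u + Min ((\<lambda>\<sigma>. ell \<sigma> u) ` S) \<le> Phi0 us + Min ((\<lambda>\<sigma>. ell \<sigma> us) ` S))
    \<longleftrightarrow> (\<exists>I A lam mu s. I \<subseteq> RU \<and> A \<subseteq> S \<and> (\<forall>r\<in>I. lam r \<ge> 0 \<and> fst r \<bullet> us = snd r)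
      \<and> (\<forall>\<sigma>\<in>A. mu \<sigma> \<ge> 0 \<and> ell \<sigma> us = s) \<and> (\<forall>\<sigma>\<in>S. s \<le> ell \<sigma> us) \<and> (\<Sum>\<sigma>\<in>A. mu \<sigma>) = 1
      \<and> (\<forall>b\<in>Basis. Dq us b + (\<Sum>\<sigma>\<in>A. mu \<sigma> * ll \<sigma> b) = (\<Sum>r\<in>I. lam r * (fst r \<bullet> b))))"
  proof
    assume "\<forall>u. (\<forall>r\<in>RU. fst r \<bullet> u \<le> snd r) \<longrightarrow> Phi0 u + Min ((\<lambda>\<sigma>. ell \<sigma> u) ` S) \<le> Phi0 us + Min ((\<lambda>\<sigma>. ell \<sigma> us) ` S)"
    then show "\<exists>I A lam mu s. I \<subseteq> RU \<and> A \<subseteq> S \<and> (\<forall>r\<in>I. lam r \<ge> 0 \<and> fst r \<bullet> us = snd r)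
      \<and> (\<forall>\<sigma>\<in>A. mu \<sigma> \<ge> 0 \<and> ell \<sigma> us = s) \<and> (\<forall>\<sigma>\<in>S. s \<le> ell \<sigma> us) \<and> (\<Sum>\<sigma>\<in>A. mu \<sigma>) = 1
      \<and> (\<forall>b\<in>Basis. Dq us b + (\<Sum>\<sigma>\<in>A. mu \<sigma> * ll \<sigma> b) = (\<Sum>r\<in>I. lam r * (fst r \<bullet> b)))"
      by (rule kkt_nec[OF finRU finS neS expand linDq Bq_sc Bq_nn ellx linll usf])
  next
    assume "\<exists>I A lam mu s. I \<subseteq> RU \<and> A \<subseteq> S \<and> (\<forall>r\<in>I. lam r \<ge> 0 \<and> fst r \<bullet> us = snd r)
      \<and> (\<forall>\<sigma>\<in>A. mu \<sigma> \<ge> 0 \<and> ell \<sigma> us = s) \<and> (\<forall>\<sigma>\<in>S. s \<le> ell \<sigma> us) \<and> (\<Sum>\<sigma>\<in>A. mu \<sigma>) = 1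
      \<and> (\<forall>b\<in>Basis. Dq us b + (\<Sum>\<sigma>\<in>A. mu \<sigma> * ll \<sigma> b) = (\<Sum>r\<in>I. lam r * (fst r \<bullet> b)))"
    then obtain I A lam mu s where H: "I \<subseteq> RU" "A \<subseteq> S" "\<forall>r\<in>I. lam r \<ge> 0 \<and> fst r \<bullet> us = snd r"
      "\<forall>\<sigma>\<in>A. mu \<sigma> \<ge> 0 \<and> ell \<sigma> us = s" "\<forall>\<sigma>\<in>S. s \<le> ell \<sigma> us" "(\<Sum>\<sigma>\<in>A. mu \<sigma>) = 1"
      "\<forall>b\<in>Basis. Dq us b + (\<Sum>\<sigma>\<in>A. mu \<sigma> * ll \<sigma> b) = (\<Sum>r\<in>I. lam r * (fst r \<bullet> b))" by blast
    show "\<forall>u. (\<forall>r\<in>RU. fst r \<bullet> u \<le> snd r) \<longrightarrow> Phi0 u + Min ((\<lambda>\<sigma>. ell \<sigma> u) ` S) \<le> Phi0 us + Min ((\<lambda>\<sigma>. ell \<sigma> us) ` S)"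
      using kkt_suff[OF finRU finS neS expand linDq Bq_nn ellx linll H] by blast
  qed
  then show ?thesis unfolding fo[unfolded z_def p_def, symmetric]
    unfolding Phi0_def Dq_def ell_def ll_def S_def z_def p_def .
qed

lemma poly_rows:
  fixes S :: "'a::euclidean_space set"
  assumes "polyhedron S"
  shows "\<exists>R. finite R \<and> S = {x. \<forall>r\<in>R. fst r \<bullet> x \<le> snd r}"
proof -
  obtain F where F: "finite F" "S = \<Inter>F" "\<forall>h\<in>F. \<exists>a b. a \<noteq> 0 \<and> h = {x. a \<bullet> x \<le> b}"
    using assms unfolding polyhedron_def by blast
  define ab :: "'a set \<Rightarrow> 'a \<times> real" where "ab h = (SOME p. h = {x. fst p \<bullet> x \<le> snd p})" for h
  have abh: "h = {x. fst (ab h) \<bullet> x \<le> snd (ab h)}" if "h \<in> F" for h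
  proof -
    from F(3)[rule_format, OF that] obtain a b where "a \<noteq> 0" "h = {x. a \<bullet> x \<le> b}" by blast
    then have "\<exists>p. h = {x. fst p \<bullet> x \<le> snd p}" by (intro exI[of _ "(a,b)"]) simp
    then show ?thesis unfolding ab_def by (rule someI_ex)
  qed
  have "S = {x. \<forall>r\<in>ab ` F. fst r \<bullet> x \<le> snd r}"
  proof (intro set_eqI iffI)
    fix x assume "x \<in> S"
    then show "x \<in> {x. \<forall>r\<in>ab ` F. fst r \<bullet> x \<le> snd r}" using F(2) abh by blast
  next
    fix x assume "x \<in> {x. \<forall>r\<in>ab ` F. fst r \<bullet> x \<le> snd r}"
    then have "\<forall>h\<in>F. x \<in> h" using abh by blast
    then show "x \<in> S" using F(2) by blast
  qed
  then show ?thesis using F(1) by blast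
qed

lemma bounded_comp:
  assumes "bounded (S::(real^'n) set)"
  shows "\<exists>B. \<forall>x\<in>S. \<forall>i. \<bar>x $ i\<bar> \<le> B"
proof -
  obtain a where "\<forall>x\<in>S. norm x \<le> a" using assms unfolding bounded_iff by blast
  then show ?thesis using component_le_norm_cart order_trans by blast
qed

lemma milp_rename:
  fixes k :: "'n::finite \<Rightarrow> 'v"
  assumes "inj k" "milp_set S"
  shows "milp_representable (range k) {v. (\<chi> i. v (k i)) \<in> S}"
proof -
  obtain m p q A B E c where
    S: "vec_nth ` S = {y. \<exists>(z::nat\<Rightarrow>real) (w::nat\<Rightarrow>int). \<forall>r<(m::nat). (\<Sum>i\<in>UNIV. A r i * y i) + (\<Sum>j<p. B r j * z j)
        + (\<Sum>j<q. E r j * real_of_int (w j)) \<le> c r}"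
    using assms(2) unfolding milp_set_def milp_representable_def by (elim conjE exE) (rule that; assumption)
  have mem: "(\<chi> i. v (k i)) \<in> S \<longleftrightarrow> (\<lambda>i. v (k i)) \<in> vec_nth ` S" for v
  proof
    assume "(\<chi> i. v (k i)) \<in> S"
    then have "vec_nth (\<chi> i. v (k i)) \<in> vec_nth ` S" by blast
    moreover have "vec_nth (\<chi> i. v (k i)) = (\<lambda>i. v (k i))" by (rule ext) simp
    ultimately show "(\<lambda>i. v (k i)) \<in> vec_nth ` S" by simp
  next
    assume "(\<lambda>i. v (k i)) \<in> vec_nth ` S"
    then obtain y where "y \<in> S" "(\<lambda>i. v (k i)) = vec_nth y" by blast
    then have "y = (\<chi> i. v (k i))" by (simp add: vec_eq_iff)
    then show "(\<chi> i. v (k i)) \<in> S" using \<open>y \<in> S\<close> by simp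
  qed
  have sm: "(\<Sum>kk\<in>range k. A r (inv k kk) * v kk) = (\<Sum>i\<in>UNIV. A r i * v (k i))" for r v
    using assms(1) by (simp add: sum.reindex)
  show ?thesis
  proof (rule milp_intro[where R="{..<m}" and Zs="{..<p}" and Ws="{..<q}" and A="\<lambda>r kk. A r (inv k kk)"
        and B=B and E=E and c=c])
    show "{v. (\<chi> i. v (k i)) \<in> S} = {v. \<exists>z w. \<forall>r\<in>{..<m}. (\<Sum>kk\<in>range k. A r (inv k kk) * v kk) +
        (\<Sum>j\<in>{..<p}. B r j * z j) + (\<Sum>j\<in>{..<q}. E r j * real_of_int (w j)) \<le> c r}"
      unfolding mem sm S by (simp add: Ball_def lessThan_iff)
  qed auto
qed

lemma lp_conj:
  assumes "lp V Z {(v,z). P v z}" "lp V Z {(v,z). Q v z}"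
  shows "lp V Z {(v,z). P v z \<and> Q v z}"
proof -
  have "{(v,z). P v z \<and> Q v z} = {(v,z). P v z} \<inter> {(v,z). Q v z}" by auto
  then show ?thesis using lp_Int[OF assms] by simp
qed

lemma lp_ball2:
  assumes "finite I" "\<And>i. i \<in> I \<Longrightarrow> lp V Z {(v,z). P i v z}"
  shows "lp V Z {(v,z). \<forall>i\<in>I. P i v z}"
proof -
  have "{(v,z). \<forall>i\<in>I. P i v z} = {x. \<forall>i\<in>I. x \<in> {(v,z). P i v z}}" by auto
  then show ?thesis using lp_ball[OF assms(1), where T="\<lambda>i. {(v,z). P i v z}"] assms(2) by simp
qed

lemma lp_all2:
  assumes "\<And>i::'a::finite. lp V Z {(v,z). P i v z}"
  shows "lp V Z {(v,z). \<forall>i. P i v z}"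
  using lp_ball2[of "UNIV::'a set" V Z P] assms by simp

lemma lp_leI:
  assumes "afff V e1" "afff Z d1" "afff V e2" "afff Z d2"
  shows "lp V Z {(v,z). e1 v + d1 z \<le> e2 v + d2 z}"
proof -
  have "{(v,z). e1 v + d1 z \<le> e2 v + d2 z} = {(v,z). (e1 v - e2 v) + (d1 z - d2 z) \<le> 0}"
    by (auto simp: algebra_simps)
  then show ?thesis using lp_le[OF afff_diff[OF assms(1,3)] afff_diff[OF assms(2,4)]] by simp
qed

lemma lp_eqI:
  assumes "afff V e1" "afff Z d1" "afff V e2" "afff Z d2"
  shows "lp V Z {(v,z). e1 v + d1 z = e2 v + d2 z}"
proof -
  have "{(v,z). e1 v + d1 z = e2 v + d2 z} = {(v,z). e1 v + d1 z \<le> e2 v + d2 z \<and> e2 v + d2 z \<le> e1 v + d1 z}"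
    by auto
  then show ?thesis using lp_conj[OF lp_leI[OF assms] lp_leI[OF assms(3,4,1,2)]] by simp
qed

definition xv :: "nat \<Rightarrow> (('nx::finite, 'nu::finite, 'nt::finite, 'np::finite) dvar \<Rightarrow> real) \<Rightarrow> real^'nx" where
  "xv t v = (\<chi> i. v (VX t i))"
definition uv :: "nat \<Rightarrow> (('nx::finite, 'nu::finite, 'nt::finite, 'np::finite) dvar \<Rightarrow> real) \<Rightarrow> real^'nu" where
  "uv t v = (\<chi> i. v (VU t i))"
definition tv :: "nat \<Rightarrow> (('nx::finite, 'nu::finite, 'nt::finite, 'np::finite) dvar \<Rightarrow> real) \<Rightarrow> real^'nt" where
  "tv t v = (\<chi> i. v (VT t i))"
definition pv :: "nat \<Rightarrow> (('nx::finite, 'nu::finite, 'nt::finite, 'np::finite) dvar \<Rightarrow> real) \<Rightarrow> real^'np" where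
  "pv t v = (\<chi> i. v (VP t i))"

definition LV :: "nat \<Rightarrow> ('nx::finite, 'nu::finite, 'nt::finite, 'np::finite) dvar set" where
  "LV t = range (VX t) \<union> range (VU t) \<union> range (VT t) \<union> range (VP t)"

lemma finite_LV: "finite (LV t)"
  unfolding LV_def by simp

lemma afff_xv: "finite V \<Longrightarrow> range (VX t) \<subseteq> V \<Longrightarrow> afff V (\<lambda>v. xv t v $ i)"
  unfolding xv_def by (simp add: afff_var subset_iff)
lemma afff_uv: "finite V \<Longrightarrow> range (VU t) \<subseteq> V \<Longrightarrow> afff V (\<lambda>v. uv t v $ i)"
  unfolding uv_def by (simp add: afff_var subset_iff)
lemma afff_tv: "finite V \<Longrightarrow> range (VT t) \<subseteq> V \<Longrightarrow> afff V (\<lambda>v. tv t v $ i)"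
  unfolding tv_def by (simp add: afff_var subset_iff)
lemma afff_pv: "finite V \<Longrightarrow> range (VP t) \<subseteq> V \<Longrightarrow> afff V (\<lambda>v. pv t v $ i)"
  unfolding pv_def by (simp add: afff_var subset_iff)

lemma LV_sub: "range (VX t) \<subseteq> LV t" "range (VU t) \<subseteq> LV t" "range (VT t) \<subseteq> LV t" "range (VP t) \<subseteq> LV t"
  unfolding LV_def by auto

lemma LV_bounded:
  assumes "\<forall>i. \<bar>xv t v $ i\<bar> \<le> M" "\<forall>i. \<bar>uv t v $ i\<bar> \<le> M" "\<forall>i. \<bar>tv t v $ i\<bar> \<le> M" "\<forall>i. \<bar>pv t v $ i\<bar> \<le> M"
  shows "\<forall>k\<in>LV t. \<bar>v k\<bar> \<le> M"
  using assms unfolding LV_def xv_def uv_def tv_def pv_def by auto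

definition FO :: "real^('nx::finite+'nu::finite)^('nx+'nu) \<Rightarrow> real^('nx+'nu)^('nt::finite+'np::finite)
    \<Rightarrow> real^'nx^'nx \<Rightarrow> real^'nu^'nx \<Rightarrow> real^'nx \<Rightarrow> (nat \<Rightarrow> nat \<Rightarrow> real^(('nx + 'nu) + ('nt + 'np)))
    \<Rightarrow> (nat \<Rightarrow> nat \<Rightarrow> real) \<Rightarrow> nat \<Rightarrow> (nat \<Rightarrow> nat set) \<Rightarrow> real^'nx \<Rightarrow> real^'nu \<Rightarrow> real^'nt \<Rightarrow> real^'np \<Rightarrow> real" where
  "FO Q H Ah Bh kh F \<zeta> K J x u \<theta> \<pi> =
      - (zof Ah Bh kh x u \<bullet> (Q *v zof Ah Bh kh x u)) + vcat \<theta> \<pi> \<bullet> (H *v zof Ah Bh kh x u)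
        + (\<Sum>i\<in>{1..K}. Min ((\<lambda>j. F i j \<bullet> vcat (zof Ah Bh kh x u) (vcat \<theta> \<pi>) + \<zeta> i j) ` J i))"

definition ELL :: "(nat \<Rightarrow> nat \<Rightarrow> real^(('nx::finite + 'nu::finite) + ('nt::finite + 'np::finite)))
    \<Rightarrow> (nat \<Rightarrow> nat \<Rightarrow> real) \<Rightarrow> nat \<Rightarrow> real^'nx^'nx \<Rightarrow> real^'nu^'nx \<Rightarrow> real^'nx \<Rightarrow> (nat \<Rightarrow> nat)
    \<Rightarrow> real^'nx \<Rightarrow> real^'nu \<Rightarrow> real^'nt \<Rightarrow> real^'np \<Rightarrow> real" where
  "ELL F \<zeta> K Ah Bh kh \<sigma> x u \<theta> \<pi> = (\<Sum>i\<in>{1..K}. F i (\<sigma> i) \<bullet> vcat (zof Ah Bh kh x u) (vcat \<theta> \<pi>) + \<zeta> i (\<sigma> i))"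

definition DQ :: "real^('nx::finite+'nu::finite)^('nx+'nu) \<Rightarrow> real^('nx+'nu)^('nt::finite+'np::finite)
    \<Rightarrow> real^'nx^'nx \<Rightarrow> real^'nu^'nx \<Rightarrow> real^'nx \<Rightarrow> real^'nx \<Rightarrow> real^'nu \<Rightarrow> real^'nt \<Rightarrow> real^'np \<Rightarrow> real^'nu \<Rightarrow> real" where
  "DQ Q H Ah Bh kh x u \<theta> \<pi> b = - (zof Ah Bh kh x u \<bullet> (Q *v zl Bh b)) - (zl Bh b \<bullet> (Q *v zof Ah Bh kh x u))
              + vcat \<theta> \<pi> \<bullet> (H *v zl Bh b)"

definition LL :: "(nat \<Rightarrow> nat \<Rightarrow> real^(('nx::finite + 'nu::finite) + ('nt::finite + 'np::finite)))
    \<Rightarrow> nat \<Rightarrow> real^'nu^'nx \<Rightarrow> (nat \<Rightarrow> nat) \<Rightarrow> real^'nu \<Rightarrow> real" where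
  "LL F K Bh \<sigma> b = (\<Sum>i\<in>{1..K}. F i (\<sigma> i) \<bullet> vcat (zl Bh b) (0::real^('nt + 'np)))"

lemma SA_exists:
  fixes Q :: "real^('nx::finite+'nu::finite)^('nx+'nu)" and H :: "real^('nx+'nu)^('nt::finite+'np::finite)"
    and Ah :: "real^'nx^'nx" and Bh :: "real^'nu^'nx" and kh :: "real^'nx"
    and F :: "nat \<Rightarrow> nat \<Rightarrow> real^(('nx + 'nu) + ('nt + 'np))" and \<zeta> :: "nat \<Rightarrow> nat \<Rightarrow> real"
    and J :: "nat \<Rightarrow> nat set" and K :: nat
    and X :: "(real^'nx) set" and U :: "(real^'nu) set" and Th :: "(real^'nt) set" and P :: "(real^'np) set"
    and t :: nat
  assumes psdQ: "psd Q" and J: "\<And>i. i \<in> {1..K} \<Longrightarrow> finite (J i) \<and> J i \<noteq> {}"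
    and pX: "polyhedron X" "bounded X" and pU: "polyhedron U" "bounded U"
    and pT: "polyhedron Th" "bounded Th" and bP: "bounded P"
  shows "\<exists>SA. milp_representable (LV t :: ('nx,'nu,'nt,'np) dvar set) SA \<and>
     (\<forall>v. xv t v \<in> X \<and> uv t v \<in> U \<and> tv t v \<in> Th \<and> pv t v \<in> P \<longrightarrow>
        (v \<in> SA \<longleftrightarrow> (\<forall>u\<in>U. FO Q H Ah Bh kh F \<zeta> K J (xv t v) u (tv t v) (pv t v)
                         \<le> FO Q H Ah Bh kh F \<zeta> K J (xv t v) (uv t v) (tv t v) (pv t v))))"
proof -
  obtain RX where RX: "finite RX" "X = {x. \<forall>r\<in>RX. fst r \<bullet> x \<le> snd r}" using poly_rows[OF pX(1)] by blast
  obtain RU where RU: "finite RU" "U = {x. \<forall>r\<in>RU. fst r \<bullet> x \<le> snd r}" using poly_rows[OF pU(1)] by blast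
  obtain RT where RT: "finite RT" "Th = {x. \<forall>r\<in>RT. fst r \<bullet> x \<le> snd r}" using poly_rows[OF pT(1)] by blast
  obtain BX where BX: "\<forall>x\<in>X. \<forall>i. \<bar>x $ i\<bar> \<le> BX" using bounded_comp[OF pX(2)] by blast
  obtain BU where BU: "\<forall>x\<in>U. \<forall>i. \<bar>x $ i\<bar> \<le> BU" using bounded_comp[OF pU(2)] by blast
  obtain BT where BT: "\<forall>x\<in>Th. \<forall>i. \<bar>x $ i\<bar> \<le> BT" using bounded_comp[OF pT(2)] by blast
  obtain BP where BP: "\<forall>x\<in>P. \<forall>i. \<bar>x $ i\<bar> \<le> BP" using bounded_comp[OF bP] by blast
  define S where "S = PiE {1..K} J"
  have finS: "finite S" unfolding S_def using J by (intro finite_PiE) auto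
  define V where "V = (LV t :: ('nx,'nu,'nt,'np) dvar set)"
  have finV: "finite V" unfolding V_def by (rule finite_LV)
  define Z :: "(unit + (((real^'nu) \<times> real) + (nat \<Rightarrow> nat))) set" where
    "Z = {Inl ()} \<union> Inr ` Inl ` RU \<union> Inr ` Inr ` S"
  have finZ: "finite Z" unfolding Z_def using RU(1) finS by simp
  define EL where "EL \<sigma> v = ELL F \<zeta> K Ah Bh kh \<sigma> (xv t v) (uv t v) (tv t v) (pv t v)" for \<sigma> v
  define DD where "DD b v = DQ Q H Ah Bh kh (xv t v) (uv t v) (tv t v) (pv t v) b" for b v
  define TA where "TA IA = {(v, z::unit + (((real^'nu) \<times> real) + (nat \<Rightarrow> nat)) \<Rightarrow> real).
     (\<forall>r\<in>RX. fst r \<bullet> xv t v + 0 \<le> snd r + 0) \<and>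
     (\<forall>r\<in>RT. fst r \<bullet> tv t v + 0 \<le> snd r + 0) \<and>
     (\<forall>r\<in>RU. fst r \<bullet> uv t v + 0 \<le> snd r + 0) \<and>
     (\<forall>i. pv t v $ i + 0 \<le> BP + 0) \<and>
     (\<forall>i. - (pv t v $ i) + 0 \<le> BP + 0) \<and>
     (\<forall>r\<in>fst IA. 0 + 0 \<le> 0 + z (Inr (Inl r))) \<and>
     (\<forall>r\<in>fst IA. fst r \<bullet> uv t v + 0 = snd r + 0) \<and>
     (\<forall>\<sigma>\<in>snd IA. 0 + 0 \<le> 0 + z (Inr (Inr \<sigma>))) \<and>
     (\<forall>\<sigma>\<in>snd IA. EL \<sigma> v + 0 = 0 + z (Inl ())) \<and>
     (\<forall>\<sigma>\<in>S. 0 + z (Inl ()) \<le> EL \<sigma> v + 0) \<and>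
     (0 + (\<Sum>\<sigma>\<in>snd IA. z (Inr (Inr \<sigma>))) = 1 + 0) \<and>
     (\<forall>b\<in>Basis. DD b v + (\<Sum>\<sigma>\<in>snd IA. z (Inr (Inr \<sigma>)) * LL F K Bh \<sigma> b)
         = 0 + (\<Sum>r\<in>fst IA. z (Inr (Inl r)) * (fst r \<bullet> b)))}" for IA
  have ax: "afff V (\<lambda>v. xv t v $ i)" for i unfolding V_def using afff_xv[OF finite_LV LV_sub(1)] .
  have au: "afff V (\<lambda>v. uv t v $ i)" for i unfolding V_def using afff_uv[OF finite_LV LV_sub(2)] .
  have at: "afff V (\<lambda>v. tv t v $ i)" for i unfolding V_def using afff_tv[OF finite_LV LV_sub(3)] .
  have ap: "afff V (\<lambda>v. pv t v $ i)" for i unfolding V_def using afff_pv[OF finite_LV LV_sub(4)] .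
  have azof: "afff V (\<lambda>v. zof Ah Bh kh (xv t v) (uv t v) $ i)" for i
    unfolding zof_def
    by (intro afff_vcat afff_vadd afff_mv afff_vconst ax au finV)
  have apar: "afff V (\<lambda>v. vcat (tv t v) (pv t v) $ i)" for i
    by (intro afff_vcat at ap)
  have aEL: "afff V (EL \<sigma>)" for \<sigma>
    unfolding EL_def ELL_def
    by (intro afff_sum afff_add afff_inner_l afff_vcat azof apar afff_const finV finite_atLeastAtMost)
  have aDD: "afff V (DD b)" for b
    unfolding DD_def DQ_def
    by (intro afff_add afff_diff afff_neg afff_inner_r afff_inner_l afff_mv azof apar finV)
  have zvar: "afff Z (\<lambda>z. z y)" if "y \<in> Z" for y using that finZ by (intro afff_var)
  have lpTA: "lp V Z (TA IA)" if IA: "IA \<in> Pow RU \<times> Pow S" for IA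
  proof -
    have fI: "finite (fst IA)" using IA RU(1) finite_subset by auto
    have fA: "finite (snd IA)" using IA finS finite_subset by auto
    have zl: "afff Z (\<lambda>z. z (Inr (Inl r)))" if "r \<in> fst IA" for r
      using that IA by (intro zvar) (auto simp: Z_def)
    have zm: "afff Z (\<lambda>z. z (Inr (Inr \<sigma>)))" if "\<sigma> \<in> snd IA" for \<sigma>
      using that IA by (intro zvar) (auto simp: Z_def)
    have zs: "afff Z (\<lambda>z. z (Inl ()))" by (intro zvar) (auto simp: Z_def)
    have s1: "afff Z (\<lambda>z. \<Sum>\<sigma>\<in>snd IA. z (Inr (Inr \<sigma>)))" by (intro afff_sum fA zm)
    have s2: "afff Z (\<lambda>z. \<Sum>\<sigma>\<in>snd IA. z (Inr (Inr \<sigma>)) * LL F K Bh \<sigma> b)" for b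
      by (intro afff_sum afff_scale_r fA zm)
    have s3: "afff Z (\<lambda>z. \<Sum>r\<in>fst IA. z (Inr (Inl r)) * (fst r \<bullet> b))" for b
      by (intro afff_sum afff_scale_r fI zl)
    have ixv: "afff V (\<lambda>v. a \<bullet> xv t v)" for a by (intro afff_inner_l finV ax)
    have iuv: "afff V (\<lambda>v. a \<bullet> uv t v)" for a by (intro afff_inner_l finV au)
    have itv: "afff V (\<lambda>v. a \<bullet> tv t v)" for a by (intro afff_inner_l finV at)
    show ?thesis unfolding TA_def
      by (intro lp_conj lp_ball2 lp_all2 lp_leI lp_eqI RX(1) RT(1) RU(1) fI fA finS finite_Basis
            afff_const ixv iuv itv ap afff_neg aEL aDD zl zm zs s1 s2 s3)
  qed
  define M where "M = max (max BX BU) (max BT BP)"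
  have bndTA: "\<exists>M. \<forall>v z. (v,z) \<in> TA IA \<longrightarrow> (\<forall>k\<in>V. \<bar>v k\<bar> \<le> M)" for IA
  proof (intro exI[of _ M] allI impI)
    fix v z assume "(v,z) \<in> TA IA"
    then have "xv t v \<in> X" "uv t v \<in> U" "tv t v \<in> Th" "\<forall>i. \<bar>pv t v $ i\<bar> \<le> BP"
      unfolding TA_def RX(2) RU(2) RT(2) by (auto simp: abs_le_iff)
    then have h: "\<forall>i. \<bar>xv t v $ i\<bar> \<le> BX" "\<forall>i. \<bar>uv t v $ i\<bar> \<le> BU" "\<forall>i. \<bar>tv t v $ i\<bar> \<le> BT"
      "\<forall>i. \<bar>pv t v $ i\<bar> \<le> BP"
      using BX BU BT by blast+
    have "\<forall>i. \<bar>xv t v $ i\<bar> \<le> M" "\<forall>i. \<bar>uv t v $ i\<bar> \<le> M" "\<forall>i. \<bar>tv t v $ i\<bar> \<le> M"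
      "\<forall>i. \<bar>pv t v $ i\<bar> \<le> M"
      using h unfolding M_def by (simp_all add: le_max_iff_disj)
    then show "\<forall>k\<in>V. \<bar>v k\<bar> \<le> M" unfolding V_def by (rule LV_bounded)
  qed
  define SA where "SA = (\<Union>IA\<in>Pow RU \<times> Pow S. {v. \<exists>z. (v,z) \<in> TA IA})"
  have milpSA: "milp_representable V SA" unfolding SA_def
    by (rule milp_union[OF finV finZ _ lpTA bndTA]) (use RU(1) finS in auto)
  have char: "v \<in> SA \<longleftrightarrow> (\<forall>u\<in>U. FO Q H Ah Bh kh F \<zeta> K J (xv t v) u (tv t v) (pv t v)
                         \<le> FO Q H Ah Bh kh F \<zeta> K J (xv t v) (uv t v) (tv t v) (pv t v))"
    if dom: "xv t v \<in> X" "uv t v \<in> U" "tv t v \<in> Th" "pv t v \<in> P" for v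
  proof -
    have rX: "\<forall>r\<in>RX. fst r \<bullet> xv t v \<le> snd r" using dom(1) RX(2) by blast
    have rU: "\<forall>r\<in>RU. fst r \<bullet> uv t v \<le> snd r" using dom(2) RU(2) by blast
    have rT: "\<forall>r\<in>RT. fst r \<bullet> tv t v \<le> snd r" using dom(3) RT(2) by blast
    have rP: "\<forall>i. \<bar>pv t v $ i\<bar> \<le> BP" using dom(4) BP by blast
    have R: "v \<in> SA \<longleftrightarrow> (\<exists>I A lam mu s. I \<subseteq> RU \<and> A \<subseteq> S \<and> (\<forall>r\<in>I. lam r \<ge> 0 \<and> fst r \<bullet> uv t v = snd r)
      \<and> (\<forall>\<sigma>\<in>A. mu \<sigma> \<ge> 0 \<and> EL \<sigma> v = s) \<and> (\<forall>\<sigma>\<in>S. s \<le> EL \<sigma> v) \<and> (\<Sum>\<sigma>\<in>A. mu \<sigma>) = 1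
      \<and> (\<forall>b\<in>Basis. DD b v + (\<Sum>\<sigma>\<in>A. mu \<sigma> * LL F K Bh \<sigma> b) = (\<Sum>r\<in>I. lam r * (fst r \<bullet> b))))"
    proof
      assume "v \<in> SA"
      then obtain IA z where IA: "IA \<in> Pow RU \<times> Pow S" "(v,z) \<in> TA IA" unfolding SA_def by blast
      show "\<exists>I A lam mu s. I \<subseteq> RU \<and> A \<subseteq> S \<and> (\<forall>r\<in>I. lam r \<ge> 0 \<and> fst r \<bullet> uv t v = snd r)
      \<and> (\<forall>\<sigma>\<in>A. mu \<sigma> \<ge> 0 \<and> EL \<sigma> v = s) \<and> (\<forall>\<sigma>\<in>S. s \<le> EL \<sigma> v) \<and> (\<Sum>\<sigma>\<in>A. mu \<sigma>) = 1
      \<and> (\<forall>b\<in>Basis. DD b v + (\<Sum>\<sigma>\<in>A. mu \<sigma> * LL F K Bh \<sigma> b) = (\<Sum>r\<in>I. lam r * (fst r \<bullet> b)))"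
        apply (rule exI[of _ "fst IA"], rule exI[of _ "snd IA"], rule exI[of _ "\<lambda>r. z (Inr (Inl r))"],
            rule exI[of _ "\<lambda>\<sigma>. z (Inr (Inr \<sigma>))"], rule exI[of _ "z (Inl ())"])
        using IA unfolding TA_def by auto
    next
      assume "\<exists>I A lam mu s. I \<subseteq> RU \<and> A \<subseteq> S \<and> (\<forall>r\<in>I. lam r \<ge> 0 \<and> fst r \<bullet> uv t v = snd r)
      \<and> (\<forall>\<sigma>\<in>A. mu \<sigma> \<ge> 0 \<and> EL \<sigma> v = s) \<and> (\<forall>\<sigma>\<in>S. s \<le> EL \<sigma> v) \<and> (\<Sum>\<sigma>\<in>A. mu \<sigma>) = 1
      \<and> (\<forall>b\<in>Basis. DD b v + (\<Sum>\<sigma>\<in>A. mu \<sigma> * LL F K Bh \<sigma> b) = (\<Sum>r\<in>I. lam r * (fst r \<bullet> b)))"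
      then obtain I A lam mu s where H: "I \<subseteq> RU" "A \<subseteq> S" "\<forall>r\<in>I. lam r \<ge> 0 \<and> fst r \<bullet> uv t v = snd r"
        "\<forall>\<sigma>\<in>A. mu \<sigma> \<ge> 0 \<and> EL \<sigma> v = s" "\<forall>\<sigma>\<in>S. s \<le> EL \<sigma> v" "(\<Sum>\<sigma>\<in>A. mu \<sigma>) = 1"
        "\<forall>b\<in>Basis. DD b v + (\<Sum>\<sigma>\<in>A. mu \<sigma> * LL F K Bh \<sigma> b) = (\<Sum>r\<in>I. lam r * (fst r \<bullet> b))" by blast
      define z :: "unit + (((real^'nu) \<times> real) + (nat \<Rightarrow> nat)) \<Rightarrow> real" where
        "z = case_sum (\<lambda>_. s) (case_sum lam mu)"
      have "(v,z) \<in> TA (I,A)" unfolding TA_def using H rX rU rT rP by (auto simp: z_def abs_le_iff)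
      moreover have "(I,A) \<in> Pow RU \<times> Pow S" using H by auto
      ultimately show "v \<in> SA" unfolding SA_def by blast
    qed
    have Kk: "(\<forall>u. (\<forall>r\<in>RU. fst r \<bullet> u \<le> snd r) \<longrightarrow> FO Q H Ah Bh kh F \<zeta> K J (xv t v) u (tv t v) (pv t v)
                         \<le> FO Q H Ah Bh kh F \<zeta> K J (xv t v) (uv t v) (tv t v) (pv t v))
      \<longleftrightarrow> (\<exists>I A lam mu s. I \<subseteq> RU \<and> A \<subseteq> S \<and> (\<forall>r\<in>I. lam r \<ge> 0 \<and> fst r \<bullet> uv t v = snd r)
      \<and> (\<forall>\<sigma>\<in>A. mu \<sigma> \<ge> 0 \<and> EL \<sigma> v = s) \<and> (\<forall>\<sigma>\<in>S. s \<le> EL \<sigma> v) \<and> (\<Sum>\<sigma>\<in>A. mu \<sigma>) = 1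
      \<and> (\<forall>b\<in>Basis. DD b v + (\<Sum>\<sigma>\<in>A. mu \<sigma> * LL F K Bh \<sigma> b) = (\<Sum>r\<in>I. lam r * (fst r \<bullet> b))))"
      unfolding FO_def EL_def DD_def ELL_def DQ_def LL_def S_def
      by (rule argmax_kkt[OF psdQ RU(1) J rU])
    show ?thesis unfolding R Kk[symmetric] RU(2) by simp
  qed
  show ?thesis using milpSA char unfolding V_def by blast
qed

lemma milp_poly_vars:
  fixes k :: "'n::finite \<Rightarrow> 'v" and S :: "(real^'n) set"
  assumes "polyhedron S"
  shows "milp_representable (range k) {v. (\<chi> i. v (k i)) \<in> S}"
proof -
  obtain R where R: "finite R" "S = {x. \<forall>r\<in>R. fst r \<bullet> x \<le> snd r}" using poly_rows[OF assms] by blast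
  have fin: "finite (range k)" by simp
  have a: "afff (range k) (\<lambda>v. a \<bullet> (\<chi> i. v (k i)))" for a
    by (intro afff_inner_l fin) (simp add: afff_var fin)
  have "lp (range k) ({}::unit set) {(v,z). \<forall>r\<in>R. fst r \<bullet> (\<chi> i. v (k i)) + 0 \<le> snd r + 0}"
    by (intro lp_ball2 lp_leI R(1) a afff_const)
  from milp_of_lp[OF fin finite.emptyI this]
  show ?thesis unfolding R(2) by simp
qed

lemma SH_exists:
  fixes Ah :: "real^'nx::finite^'nx" and Bh :: "real^'nu::finite^'nx" and kh :: "real^'nx"
  shows "\<exists>SH. milp_representable (LV t \<union> range (VX (Suc t)) :: ('nx,'nu,'nt::finite,'np::finite) dvar set) SH \<and>
     (\<forall>v. v \<in> SH \<longleftrightarrow> xv (Suc t) v = Ah *v xv t v + Bh *v uv t v + kh)"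
proof -
  define V where "V = (LV t \<union> range (VX (Suc t)) :: ('nx,'nu,'nt,'np) dvar set)"
  have finV: "finite V" unfolding V_def using finite_LV by simp
  have ax: "afff V (\<lambda>v. xv t v $ i)" for i unfolding V_def using afff_xv[OF finV[unfolded V_def]] LV_sub(1) by blast
  have au: "afff V (\<lambda>v. uv t v $ i)" for i unfolding V_def using afff_uv[OF finV[unfolded V_def]] LV_sub(2) by blast
  have ax1: "afff V (\<lambda>v. xv (Suc t) v $ i)" for i unfolding V_def using afff_xv[OF finV[unfolded V_def]] by blast
  have "lp V ({}::unit set) {(v,z). \<forall>j. xv (Suc t) v $ j + 0 = (Ah *v xv t v + Bh *v uv t v + kh) $ j + 0}"
    by (intro lp_all2 lp_eqI ax1 afff_const afff_vadd afff_mv afff_vconst finV ax au)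
  from milp_of_lp[OF finV finite.emptyI this]
  have "milp_representable V {v. \<forall>j. xv (Suc t) v $ j = (Ah *v xv t v + Bh *v uv t v + kh) $ j}" by simp
  then show ?thesis unfolding V_def by (intro exI[of _ "{v. \<forall>j. xv (Suc t) v $ j = (Ah *v xv t v + Bh *v uv t v + kh) $ j}"])
    (simp add: vec_eq_iff)
qed

lemma mv_bound:
  fixes G :: "real^'n::finite^'m::finite"
  assumes "\<forall>k. \<bar>w $ k\<bar> \<le> M0"
  shows "\<bar>(G *v w + c) $ j\<bar> \<le> (\<Sum>j\<in>UNIV. \<Sum>k\<in>UNIV. \<bar>G $ j $ k\<bar>) * M0 + (\<Sum>j\<in>UNIV. \<bar>c $ j\<bar>)"
proof -
  have M0: "M0 \<ge> 0" using assms order_trans abs_ge_zero by blast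
  have "\<bar>(G *v w) $ j\<bar> = \<bar>\<Sum>k\<in>UNIV. G $ j $ k * w $ k\<bar>" by (simp add: matrix_vector_mult_def)
  also have "\<dots> \<le> (\<Sum>k\<in>UNIV. \<bar>G $ j $ k * w $ k\<bar>)" by (rule sum_abs)
  also have "\<dots> \<le> (\<Sum>k\<in>UNIV. \<bar>G $ j $ k\<bar> * M0)"
    by (rule sum_mono) (use assms in \<open>simp add: abs_mult mult_left_mono\<close>)
  also have "\<dots> = (\<Sum>k\<in>UNIV. \<bar>G $ j $ k\<bar>) * M0" by (simp add: sum_distrib_right)
  also have "\<dots> \<le> (\<Sum>j\<in>UNIV. \<Sum>k\<in>UNIV. \<bar>G $ j $ k\<bar>) * M0"
    by (intro mult_right_mono M0 member_le_sum) (auto intro: sum_nonneg)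
  finally have 1: "\<bar>(G *v w) $ j\<bar> \<le> (\<Sum>j\<in>UNIV. \<Sum>k\<in>UNIV. \<bar>G $ j $ k\<bar>) * M0" .
  have 2: "\<bar>c $ j\<bar> \<le> (\<Sum>j\<in>UNIV. \<bar>c $ j\<bar>)" by (intro member_le_sum) auto
  have "\<bar>(G *v w + c) $ j\<bar> \<le> \<bar>(G *v w) $ j\<bar> + \<bar>c $ j\<bar>" by (simp add: abs_triangle_ineq)
  then show ?thesis using 1 2 by linarith
qed


lemma SG_exists:
  fixes Gp :: "nat \<Rightarrow> real^(('nx::finite + 'nu::finite) + ('nt::finite + 'np::finite))^'nt"
    and \<chi>p :: "nat \<Rightarrow> real^'nt" and rows :: "nat \<Rightarrow> nat"
    and Bp :: "nat \<Rightarrow> nat \<Rightarrow> real^(('nx + 'nu) + ('nt + 'np))" and \<psi> :: "nat \<Rightarrow> nat \<Rightarrow> real"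
    and npc :: nat and g :: "real^'nx \<Rightarrow> real^'nu \<Rightarrow> real^'nt \<Rightarrow> real^'np \<Rightarrow> real^'nt"
    and X :: "(real^'nx) set" and U :: "(real^'nu) set" and Th :: "(real^'nt) set" and P :: "(real^'np) set"
    and t :: nat
  assumes pX: "polyhedron X" "bounded X" and pU: "polyhedron U" "bounded U"
    and pT: "polyhedron Th" "bounded Th" and bP: "bounded P"
    and A3_g: "\<And>x u \<theta> \<pi> i. x \<in> X \<Longrightarrow> u \<in> U \<Longrightarrow> \<theta> \<in> Th \<Longrightarrow> \<pi> \<in> P \<Longrightarrow> i < npc \<Longrightarrow>
        (\<forall>l<rows i. Bp i l \<bullet> vcat (vcat x u) (vcat \<theta> \<pi>) \<le> \<psi> i l) \<Longrightarrow>
        g x u \<theta> \<pi> = Gp i *v vcat (vcat x u) (vcat \<theta> \<pi>) + \<chi>p i"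
    and cover: "\<And>x u \<theta> \<pi>. x \<in> X \<Longrightarrow> u \<in> U \<Longrightarrow> \<theta> \<in> Th \<Longrightarrow> \<pi> \<in> P \<Longrightarrow>
        \<exists>i<npc. \<forall>l<rows i. Bp i l \<bullet> vcat (vcat x u) (vcat \<theta> \<pi>) \<le> \<psi> i l"
  shows "\<exists>SG. milp_representable (LV t \<union> range (VT (Suc t)) :: ('nx,'nu,'nt,'np) dvar set) SG \<and>
     (\<forall>v. xv t v \<in> X \<and> uv t v \<in> U \<and> tv t v \<in> Th \<and> pv t v \<in> P \<longrightarrow>
        (v \<in> SG \<longleftrightarrow> tv (Suc t) v = g (xv t v) (uv t v) (tv t v) (pv t v)))"
proof -
  obtain RX where RX: "finite RX" "X = {x. \<forall>r\<in>RX. fst r \<bullet> x \<le> snd r}" using poly_rows[OF pX(1)] by blast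
  obtain RU where RU: "finite RU" "U = {x. \<forall>r\<in>RU. fst r \<bullet> x \<le> snd r}" using poly_rows[OF pU(1)] by blast
  obtain RT where RT: "finite RT" "Th = {x. \<forall>r\<in>RT. fst r \<bullet> x \<le> snd r}" using poly_rows[OF pT(1)] by blast
  obtain BX where BX: "\<forall>x\<in>X. \<forall>i. \<bar>x $ i\<bar> \<le> BX" using bounded_comp[OF pX(2)] by blast
  obtain BU where BU: "\<forall>x\<in>U. \<forall>i. \<bar>x $ i\<bar> \<le> BU" using bounded_comp[OF pU(2)] by blast
  obtain BT where BT: "\<forall>x\<in>Th. \<forall>i. \<bar>x $ i\<bar> \<le> BT" using bounded_comp[OF pT(2)] by blast
  obtain BP where BP: "\<forall>x\<in>P. \<forall>i. \<bar>x $ i\<bar> \<le> BP" using bounded_comp[OF bP] by blast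
  define V where "V = (LV t \<union> range (VT (Suc t)) :: ('nx,'nu,'nt,'np) dvar set)"
  have finV: "finite V" unfolding V_def using finite_LV by simp
  have ax: "afff V (\<lambda>v. xv t v $ i)" for i unfolding V_def using afff_xv[OF finV[unfolded V_def]] LV_sub(1) by blast
  have au: "afff V (\<lambda>v. uv t v $ i)" for i unfolding V_def using afff_uv[OF finV[unfolded V_def]] LV_sub(2) by blast
  have at: "afff V (\<lambda>v. tv t v $ i)" for i unfolding V_def using afff_tv[OF finV[unfolded V_def]] LV_sub(3) by blast
  have ap: "afff V (\<lambda>v. pv t v $ i)" for i unfolding V_def using afff_pv[OF finV[unfolded V_def]] LV_sub(4) by blast
  have at1: "afff V (\<lambda>v. tv (Suc t) v $ i)" for i unfolding V_def using afff_tv[OF finV[unfolded V_def]] by blast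
  define W :: "(('nx,'nu,'nt,'np) dvar \<Rightarrow> real) \<Rightarrow> real^(('nx+'nu)+('nt+'np))" where "W v = vcat (vcat (xv t v) (uv t v)) (vcat (tv t v) (pv t v))" for v
  have aW: "afff V (\<lambda>v. W v $ i)" for i unfolding W_def by (intro afff_vcat ax au at ap)
  define TG where "TG i = {(v, z::unit \<Rightarrow> real).
     (\<forall>r\<in>RX. fst r \<bullet> xv t v + 0 \<le> snd r + 0) \<and>
     (\<forall>r\<in>RU. fst r \<bullet> uv t v + 0 \<le> snd r + 0) \<and>
     (\<forall>r\<in>RT. fst r \<bullet> tv t v + 0 \<le> snd r + 0) \<and>
     (\<forall>j. pv t v $ j + 0 \<le> BP + 0) \<and>
     (\<forall>j. - (pv t v $ j) + 0 \<le> BP + 0) \<and>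
     (\<forall>l\<in>{..<rows i}. Bp i l \<bullet> W v + 0 \<le> \<psi> i l + 0) \<and>
     (\<forall>j. tv (Suc t) v $ j + 0 = (Gp i *v W v + \<chi>p i) $ j + 0)}" for i
  have lpTG: "lp V {} (TG i)" for i
  proof -
    have ixv: "afff V (\<lambda>v. a \<bullet> xv t v)" for a by (intro afff_inner_l finV ax)
    have iuv: "afff V (\<lambda>v. a \<bullet> uv t v)" for a by (intro afff_inner_l finV au)
    have itv: "afff V (\<lambda>v. a \<bullet> tv t v)" for a by (intro afff_inner_l finV at)
    have iW: "afff V (\<lambda>v. a \<bullet> W v)" for a by (intro afff_inner_l finV aW)
    have gW: "afff V (\<lambda>v. (Gp i *v W v + \<chi>p i) $ j)" for j by (intro afff_vadd afff_mv afff_vconst finV aW)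
    show ?thesis unfolding TG_def
      by (intro lp_conj lp_ball2 lp_all2 lp_leI lp_eqI RX(1) RT(1) RU(1) finite_lessThan
            afff_const ixv iuv itv iW gW at1 ap afff_neg)
  qed
  define M0 where "M0 = max (max BX BU) (max BT BP)"
  have bndTG: "\<exists>M. \<forall>v z. (v,z) \<in> TG i \<longrightarrow> (\<forall>k\<in>V. \<bar>v k\<bar> \<le> M)" for i
  proof -
    define Bi where "Bi = (\<Sum>j\<in>UNIV. \<Sum>k\<in>UNIV. \<bar>Gp i $ j $ k\<bar>) * M0 + (\<Sum>j\<in>UNIV. \<bar>\<chi>p i $ j\<bar>)"
    show ?thesis
    proof (intro exI[of _ "max M0 Bi"] allI impI)
      fix v z assume mem: "(v,z) \<in> TG i"
      then have "xv t v \<in> X" "uv t v \<in> U" "tv t v \<in> Th" "\<forall>i. \<bar>pv t v $ i\<bar> \<le> BP"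
        unfolding TG_def RX(2) RU(2) RT(2) by (auto simp: abs_le_iff)
      then have h: "\<forall>i. \<bar>xv t v $ i\<bar> \<le> BX" "\<forall>i. \<bar>uv t v $ i\<bar> \<le> BU" "\<forall>i. \<bar>tv t v $ i\<bar> \<le> BT"
        "\<forall>i. \<bar>pv t v $ i\<bar> \<le> BP"
        using BX BU BT by blast+
      have h2: "\<forall>i. \<bar>xv t v $ i\<bar> \<le> M0" "\<forall>i. \<bar>uv t v $ i\<bar> \<le> M0" "\<forall>i. \<bar>tv t v $ i\<bar> \<le> M0"
        "\<forall>i. \<bar>pv t v $ i\<bar> \<le> M0"
        using h unfolding M0_def by (simp_all add: le_max_iff_disj)
      have hW: "\<forall>k. \<bar>W v $ k\<bar> \<le> M0"
      proof
        fix k show "\<bar>W v $ k\<bar> \<le> M0" using h2 unfolding W_def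
          by (cases k rule: sum.exhaust; rename_tac a; case_tac a) (auto simp: vcat_nth)
      qed
      have ht1: "\<forall>j. \<bar>tv (Suc t) v $ j\<bar> \<le> Bi"
      proof
        fix j
        have "tv (Suc t) v $ j = (Gp i *v W v + \<chi>p i) $ j" using mem unfolding TG_def by auto
        then show "\<bar>tv (Suc t) v $ j\<bar> \<le> Bi" unfolding Bi_def using mv_bound[OF hW] by simp
      qed
      have "\<forall>k\<in>LV t. \<bar>v k\<bar> \<le> max M0 Bi" by (rule LV_bounded) (use h2 in \<open>simp_all add: le_max_iff_disj\<close>)
      moreover have "\<forall>k\<in>range (VT (Suc t)). \<bar>v k\<bar> \<le> max M0 Bi"
        using ht1 unfolding tv_def by (auto simp: le_max_iff_disj)
      ultimately show "\<forall>k\<in>V. \<bar>v k\<bar> \<le> max M0 Bi" unfolding V_def by blast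
    qed
  qed
  define SG where "SG = (\<Union>i\<in>{..<npc}. {v. \<exists>z. (v,z) \<in> TG i})"
  have milpSG: "milp_representable V SG" unfolding SG_def
    by (rule milp_union[OF finV finite.emptyI finite_lessThan lpTG bndTG])
  have char: "v \<in> SG \<longleftrightarrow> tv (Suc t) v = g (xv t v) (uv t v) (tv t v) (pv t v)"
    if dom: "xv t v \<in> X" "uv t v \<in> U" "tv t v \<in> Th" "pv t v \<in> P" for v
  proof
    assume "v \<in> SG"
    then obtain i z where i: "i < npc" "(v,z) \<in> TG i" unfolding SG_def by blast
    then have rows: "\<forall>l<rows i. Bp i l \<bullet> W v \<le> \<psi> i l" and eq: "\<forall>j. tv (Suc t) v $ j = (Gp i *v W v + \<chi>p i) $ j"
      unfolding TG_def by auto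
    have "g (xv t v) (uv t v) (tv t v) (pv t v) = Gp i *v W v + \<chi>p i"
      unfolding W_def by (rule A3_g[OF dom i(1) rows[unfolded W_def]])
    then show "tv (Suc t) v = g (xv t v) (uv t v) (tv t v) (pv t v)" using eq by (simp add: vec_eq_iff)
  next
    assume th: "tv (Suc t) v = g (xv t v) (uv t v) (tv t v) (pv t v)"
    obtain i where i: "i < npc" "\<forall>l<rows i. Bp i l \<bullet> W v \<le> \<psi> i l"
      using cover[OF dom] unfolding W_def by blast
    have "g (xv t v) (uv t v) (tv t v) (pv t v) = Gp i *v W v + \<chi>p i"
      unfolding W_def by (rule A3_g[OF dom i(1) i(2)[unfolded W_def]])
    then have eq: "tv (Suc t) v = Gp i *v W v + \<chi>p i" using th by simp
    have rX: "\<forall>r\<in>RX. fst r \<bullet> xv t v \<le> snd r" using dom(1) RX(2) by blast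
    have rU: "\<forall>r\<in>RU. fst r \<bullet> uv t v \<le> snd r" using dom(2) RU(2) by blast
    have rT: "\<forall>r\<in>RT. fst r \<bullet> tv t v \<le> snd r" using dom(3) RT(2) by blast
    have rP: "\<forall>i. \<bar>pv t v $ i\<bar> \<le> BP" using dom(4) BP by blast
    have "(v, \<lambda>_. 0) \<in> TG i" unfolding TG_def using rX rU rT rP i(2) eq by (auto simp: abs_le_iff)
    then show "v \<in> SG" unfolding SG_def using i(1) by blast
  qed
  show ?thesis using milpSG char unfolding V_def by blast
qed

theorem proposition1:
  fixes X :: "(real^'nx::finite) set" and U :: "(real^'nu::finite) set"
    and Th :: "(real^'nt::finite) set" and P :: "(real^'np::finite) set"
    and f :: "real^'nx \<Rightarrow> real^'nu \<Rightarrow> real^'nt \<Rightarrow> real^'np \<Rightarrow> real"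
    and h :: "real^'nx \<Rightarrow> real^'nu \<Rightarrow> real^'nx"
    and g :: "real^'nx \<Rightarrow> real^'nu \<Rightarrow> real^'nt \<Rightarrow> real^'np \<Rightarrow> real^'nt"
    and Q :: "real^('nx + 'nu)^('nx + 'nu)"
    and H :: "real^('nx + 'nu)^('nt + 'np)"
    and K :: nat and J :: "nat \<Rightarrow> nat set"
    and F :: "nat \<Rightarrow> nat \<Rightarrow> real^(('nx + 'nu) + ('nt + 'np))"
    and \<zeta> :: "nat \<Rightarrow> nat \<Rightarrow> real"
    and Ah :: "real^'nx^'nx" and Bh :: "real^'nu^'nx" and kh :: "real^'nx"
    and npc :: nat and Gp :: "nat \<Rightarrow> real^(('nx + 'nu) + ('nt + 'np))^'nt"
    and \<chi>p :: "nat \<Rightarrow> real^'nt" and rows :: "nat \<Rightarrow> nat"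
    and Bp :: "nat \<Rightarrow> nat \<Rightarrow> real^(('nx + 'nu) + ('nt + 'np))"
    and \<psi> :: "nat \<Rightarrow> nat \<Rightarrow> real"
    and M :: "'w measure"
    and nnx nnu :: nat
    and D :: "real^'nx^'dx::finite" and C :: "real^'nu^'dy::finite"
    and \<nu> :: "nat \<Rightarrow> 'w \<Rightarrow> real^'dx" and \<omega> :: "nat \<Rightarrow> 'w \<Rightarrow> real^'dy"
    and p\<nu> :: "real^'dx \<Rightarrow> real" and p\<omega> :: "real^'dy \<Rightarrow> real"
    and N :: nat
  assumes
    \<comment> \<open>(A1)\<close>
    A1_X: "polyhedron X" "bounded X" "compact X" "convex X"
    and A1_U: "polyhedron U" "bounded U" "compact U" "convex U"
    and A1_Th: "polyhedron Th" "bounded Th" "compact Th" "convex Th"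
    and A1_P: "milp_set P" "bounded P" "compact P"
    \<comment> \<open>(A2)\<close>
    and A2_Q: "psd Q"
    and A2_J: "\<And>i. i \<in> {1..K} \<Longrightarrow> finite (J i) \<and> J i \<noteq> {}"
    and A2_f: "\<And>x u \<theta> \<pi>. x \<in> X \<Longrightarrow> u \<in> U \<Longrightarrow> \<theta> \<in> Th \<Longrightarrow> \<pi> \<in> P \<Longrightarrow>
        f x u \<theta> \<pi> = - (vcat x u \<bullet> (Q *v vcat x u)) + vcat \<theta> \<pi> \<bullet> (H *v vcat x u)
          + (\<Sum>i\<in>{1..K}. Min ((\<lambda>j. F i j \<bullet> vcat (vcat x u) (vcat \<theta> \<pi>) + \<zeta> i j) ` J i))"
    and A2_cx: "\<And>u \<theta> \<pi>. u \<in> U \<Longrightarrow> \<theta> \<in> Th \<Longrightarrow> \<pi> \<in> P \<Longrightarrow> concave_on X (\<lambda>x. f x u \<theta> \<pi>)"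
    and A2_cu: "\<And>x \<theta> \<pi>. x \<in> X \<Longrightarrow> \<theta> \<in> Th \<Longrightarrow> \<pi> \<in> P \<Longrightarrow> strict_concave_on U (\<lambda>u. f x u \<theta> \<pi>)"
    and A2_ct: "\<And>x u \<pi>. x \<in> X \<Longrightarrow> u \<in> U \<Longrightarrow> \<pi> \<in> P \<Longrightarrow> concave_on Th (\<lambda>\<theta>. f x u \<theta> \<pi>)"
    \<comment> \<open>(A3)\<close>
    and A3_h: "\<And>x u. x \<in> X \<Longrightarrow> u \<in> U \<Longrightarrow> h x u = Ah *v x + Bh *v u + kh"
    and A3_h_onto: "(\<lambda>(x, u). h x u) ` (X \<times> U) = X"
    and A3_g: "\<And>x u \<theta> \<pi> i. x \<in> X \<Longrightarrow> u \<in> U \<Longrightarrow> \<theta> \<in> Th \<Longrightarrow> \<pi> \<in> P \<Longrightarrow> i < npc \<Longrightarrow>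
        (\<forall>l<rows i. Bp i l \<bullet> vcat (vcat x u) (vcat \<theta> \<pi>) \<le> \<psi> i l) \<Longrightarrow>
        g x u \<theta> \<pi> = Gp i *v vcat (vcat x u) (vcat \<theta> \<pi>) + \<chi>p i"
    and A3_g_cover: "\<And>x u \<theta> \<pi>. x \<in> X \<Longrightarrow> u \<in> U \<Longrightarrow> \<theta> \<in> Th \<Longrightarrow> \<pi> \<in> P \<Longrightarrow>
        \<exists>i<npc. \<forall>l<rows i. Bp i l \<bullet> vcat (vcat x u) (vcat \<theta> \<pi>) \<le> \<psi> i l"
    and A3_g_disj: "\<And>i j. i < npc \<Longrightarrow> j < npc \<Longrightarrow> i \<noteq> j \<Longrightarrow>
        interior {z. \<forall>l<rows i. Bp i l \<bullet> z \<le> \<psi> i l}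
          \<inter> interior {z. \<forall>l<rows j. Bp j l \<bullet> z \<le> \<psi> j l} = {}"
    and A3_g_onto: "{g x u \<theta> \<pi> | x u \<theta> \<pi>. x \<in> X \<and> u \<in> U \<and> \<theta> \<in> Th \<and> \<pi> \<in> P} = Th"
    \<comment> \<open>(A4)\<close>
    and A4_M: "prob_space M"
    and A4_nu_indep: "prob_space.indep_vars M (\<lambda>_. borel) \<nu> {..nnx}"
    and A4_nu_dist: "\<And>i. i \<le> nnx \<Longrightarrow> distributed M lborel (\<nu> i) (\<lambda>e. ennreal (p\<nu> e))"
    and A4_nu_comp: "\<And>i. i \<le> nnx \<Longrightarrow>
        prob_space.indep_vars M (\<lambda>_. borel) (\<lambda>k w. \<nu> i w $ k) UNIV \<and>
        (\<forall>k k'. distr M borel (\<lambda>w. \<nu> i w $ k) = distr M borel (\<lambda>w. \<nu> i w $ k'))"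
    and A4_nu_mom: "\<And>i k. i \<le> nnx \<Longrightarrow>
        prob_space.expectation M (\<lambda>w. \<nu> i w $ k) = 0 \<and> integrable M (\<lambda>w. (\<nu> i w $ k)^2)"
    and A4_om_indep: "prob_space.indep_vars M (\<lambda>_. borel) \<omega> {..nnu}"
    and A4_om_dist: "\<And>i. i \<le> nnu \<Longrightarrow> distributed M lborel (\<omega> i) (\<lambda>e. ennreal (p\<omega> e))"
    and A4_om_comp: "\<And>i. i \<le> nnu \<Longrightarrow>
        prob_space.indep_vars M (\<lambda>_. borel) (\<lambda>k w. \<omega> i w $ k) UNIV \<and>
        (\<forall>k k'. distr M borel (\<lambda>w. \<omega> i w $ k) = distr M borel (\<lambda>w. \<omega> i w $ k'))"
    and A4_om_mom: "\<And>i k. i \<le> nnu \<Longrightarrow>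
        prob_space.expectation M (\<lambda>w. \<omega> i w $ k) = 0 \<and> integrable M (\<lambda>w. (\<omega> i w $ k)^2)"
    and A4_log: "milp_set (log_hypograph p\<nu>)" "milp_set (log_hypograph p\<omega>)"
    \<comment> \<open>(A5)\<close>
    and A5: "\<exists>T \<pi>s. (\<forall>t<T. \<pi>s t \<in> P) \<and>
        (\<forall>xs us ths xs' us' ths'.
           traj_feasible T f h g X U Th P xs us ths \<pi>s \<and>
           traj_feasible T f h g X U Th P xs' us' ths' \<pi>s \<and>
           (\<forall>t\<le>T. D *v xs t = D *v xs' t) \<and> (\<forall>t<T. C *v us t = C *v us' t)
           \<longrightarrow> xs 0 = xs' 0 \<and> ths 0 = ths' 0)"
  shows "milp_representable (region_vars N) (feasible_region N f h g X U Th P)"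
proof -
  have finRV: "finite (region_vars N :: ('nx,'nu,'nt,'np) dvar set)"
  proof (rule finite_subset)
    show "(region_vars N :: ('nx,'nu,'nt,'np) dvar set) \<subseteq> (\<Union>t\<in>{..N}. LV t)"
    proof
      fix k assume "k \<in> (region_vars N :: ('nx,'nu,'nt,'np) dvar set)"
      then consider (a) t i where "k = VX t i" "t \<le> N" | (b) t i where "k = VT t i" "t \<le> N"
        | (c) t i where "k = VU t i" "t < N" | (d) t i where "k = VP t i" "t < N"
        unfolding region_vars_def by blast
      then show "k \<in> (\<Union>t\<in>{..N}. LV t)"
      proof cases
        case (a t i) then show ?thesis by (intro UN_I[of t]) (auto simp: LV_def)
      next
        case (b t i) then show ?thesis by (intro UN_I[of t]) (auto simp: LV_def)
      next
        case (c t i) then show ?thesis by (intro UN_I[of t]) (auto simp: LV_def)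
      next
        case (d t i) then show ?thesis by (intro UN_I[of t]) (auto simp: LV_def)
      qed
    qed
    show "finite (\<Union>t\<in>{..N}. (LV t :: ('nx,'nu,'nt,'np) dvar set))" using finite_LV by blast
  qed
  have LVsub: "(LV t :: ('nx,'nu,'nt,'np) dvar set) \<subseteq> region_vars N" if "t < N" for t
    using that unfolding region_vars_def LV_def by auto
  have LVsubX: "(LV t \<union> range (VX (Suc t)) :: ('nx,'nu,'nt,'np) dvar set) \<subseteq> region_vars N" if "t < N" for t
    using that unfolding region_vars_def LV_def by auto
  have LVsubT: "(LV t \<union> range (VT (Suc t)) :: ('nx,'nu,'nt,'np) dvar set) \<subseteq> region_vars N" if "t < N" for t
    using that unfolding region_vars_def LV_def by auto
  have hX: "h x u \<in> X" if "x \<in> X" "u \<in> U" for x u using A3_h_onto that by blast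
  have FOeq: "f (h x u) u \<theta> \<pi> = FO Q H Ah Bh kh F \<zeta> K J x u \<theta> \<pi>"
    if "x \<in> X" "u \<in> U" "\<theta> \<in> Th" "\<pi> \<in> P" for x u \<theta> \<pi>
    using A2_f[OF hX[OF that(1,2)] that(2,3,4)] A3_h[OF that(1,2)] unfolding FO_def zof_def by simp
  have "\<forall>t. \<exists>SA. milp_representable (LV t :: ('nx,'nu,'nt,'np) dvar set) SA \<and>
     (\<forall>v. xv t v \<in> X \<and> uv t v \<in> U \<and> tv t v \<in> Th \<and> pv t v \<in> P \<longrightarrow>
        (v \<in> SA \<longleftrightarrow> (\<forall>u\<in>U. FO Q H Ah Bh kh F \<zeta> K J (xv t v) u (tv t v) (pv t v)
                         \<le> FO Q H Ah Bh kh F \<zeta> K J (xv t v) (uv t v) (tv t v) (pv t v))))"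
    using SA_exists[where K=K and J=J and H=H and Ah=Ah and Bh=Bh and kh=kh and F=F and \<zeta>=\<zeta>,
        OF A2_Q A2_J A1_X(1,2) A1_U(1,2) A1_Th(1,2) A1_P(2)] by blast
  from choice[OF this] obtain SA where SA: "\<forall>t. milp_representable (LV t :: ('nx,'nu,'nt,'np) dvar set) (SA t) \<and>
     (\<forall>v. xv t v \<in> X \<and> uv t v \<in> U \<and> tv t v \<in> Th \<and> pv t v \<in> P \<longrightarrow>
        (v \<in> SA t \<longleftrightarrow> (\<forall>u\<in>U. FO Q H Ah Bh kh F \<zeta> K J (xv t v) u (tv t v) (pv t v)
                         \<le> FO Q H Ah Bh kh F \<zeta> K J (xv t v) (uv t v) (tv t v) (pv t v))))" by blast
  have "\<forall>t. \<exists>SG. milp_representable (LV t \<union> range (VT (Suc t)) :: ('nx,'nu,'nt,'np) dvar set) SG \<and>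
     (\<forall>v. xv t v \<in> X \<and> uv t v \<in> U \<and> tv t v \<in> Th \<and> pv t v \<in> P \<longrightarrow>
        (v \<in> SG \<longleftrightarrow> tv (Suc t) v = g (xv t v) (uv t v) (tv t v) (pv t v)))"
    using SG_exists[OF A1_X(1,2) A1_U(1,2) A1_Th(1,2) A1_P(2), of npc rows Bp \<psi> g Gp \<chi>p] A3_g A3_g_cover by blast
  from choice[OF this] obtain SG where SG: "\<forall>t. milp_representable (LV t \<union> range (VT (Suc t)) :: ('nx,'nu,'nt,'np) dvar set) (SG t) \<and>
     (\<forall>v. xv t v \<in> X \<and> uv t v \<in> U \<and> tv t v \<in> Th \<and> pv t v \<in> P \<longrightarrow>
        (v \<in> SG t \<longleftrightarrow> tv (Suc t) v = g (xv t v) (uv t v) (tv t v) (pv t v)))" by blast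
  have "\<forall>t. \<exists>SH. milp_representable (LV t \<union> range (VX (Suc t)) :: ('nx,'nu,'nt,'np) dvar set) SH \<and>
     (\<forall>v. v \<in> SH \<longleftrightarrow> xv (Suc t) v = Ah *v xv t v + Bh *v uv t v + kh)"
    using SH_exists by blast
  from choice[OF this] obtain SH where SH: "\<forall>t. milp_representable (LV t \<union> range (VX (Suc t)) :: ('nx,'nu,'nt,'np) dvar set) (SH t) \<and>
     (\<forall>v. v \<in> SH t \<longleftrightarrow> xv (Suc t) v = Ah *v xv t v + Bh *v uv t v + kh)" by blast
  define Big where "Big = (\<Inter>t\<in>{..N}. {v. xv t v \<in> X} \<inter> {v. tv t v \<in> Th})
     \<inter> (\<Inter>t\<in>{..<N}. {v. uv t v \<in> U} \<inter> {v. pv t v \<in> P} \<inter> SA t \<inter> SH t \<inter> SG t)"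
  have milpBig: "milp_representable (region_vars N :: ('nx,'nu,'nt,'np) dvar set) Big"
  proof -
    have injs: "inj (VX t :: _ \<Rightarrow> ('nx,'nu,'nt,'np) dvar)" "inj (VU t :: _ \<Rightarrow> ('nx,'nu,'nt,'np) dvar)"
      "inj (VT t :: _ \<Rightarrow> ('nx,'nu,'nt,'np) dvar)" "inj (VP t :: _ \<Rightarrow> ('nx,'nu,'nt,'np) dvar)" for t by (auto simp: inj_def)
    have mX: "milp_representable (region_vars N :: ('nx,'nu,'nt,'np) dvar set) {v. xv t v \<in> X}" if "t \<in> {..N}" for t
    proof (rule milp_mono_vars[OF _ _ finRV])
      show "milp_representable (range (VX t) :: ('nx,'nu,'nt,'np) dvar set) {v. xv t v \<in> X}"
        unfolding xv_def by (rule milp_poly_vars[OF A1_X(1)])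
      show "(range (VX t) :: ('nx,'nu,'nt,'np) dvar set) \<subseteq> region_vars N" using that unfolding region_vars_def by auto
    qed
    have mT: "milp_representable (region_vars N :: ('nx,'nu,'nt,'np) dvar set) {v. tv t v \<in> Th}" if "t \<in> {..N}" for t
    proof (rule milp_mono_vars[OF _ _ finRV])
      show "milp_representable (range (VT t) :: ('nx,'nu,'nt,'np) dvar set) {v. tv t v \<in> Th}"
        unfolding tv_def by (rule milp_poly_vars[OF A1_Th(1)])
      show "(range (VT t) :: ('nx,'nu,'nt,'np) dvar set) \<subseteq> region_vars N" using that unfolding region_vars_def by auto
    qed
    have mU: "milp_representable (region_vars N :: ('nx,'nu,'nt,'np) dvar set) {v. uv t v \<in> U}" if "t \<in> {..<N}" for t
    proof (rule milp_mono_vars[OF _ _ finRV])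
      show "milp_representable (range (VU t) :: ('nx,'nu,'nt,'np) dvar set) {v. uv t v \<in> U}"
        unfolding uv_def by (rule milp_poly_vars[OF A1_U(1)])
      show "(range (VU t) :: ('nx,'nu,'nt,'np) dvar set) \<subseteq> region_vars N" using that unfolding region_vars_def by auto
    qed
    have mP: "milp_representable (region_vars N :: ('nx,'nu,'nt,'np) dvar set) {v. pv t v \<in> P}" if "t \<in> {..<N}" for t
    proof (rule milp_mono_vars[OF _ _ finRV])
      show "milp_representable (range (VP t) :: ('nx,'nu,'nt,'np) dvar set) {v. pv t v \<in> P}"
        unfolding pv_def by (rule milp_rename[OF injs(4) A1_P(1)])
      show "(range (VP t) :: ('nx,'nu,'nt,'np) dvar set) \<subseteq> region_vars N" using that unfolding region_vars_def by auto
    qed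
    have mA: "milp_representable (region_vars N :: ('nx,'nu,'nt,'np) dvar set) (SA t)" if "t \<in> {..<N}" for t
      using milp_mono_vars[OF _ LVsub finRV] SA that by auto
    have mH: "milp_representable (region_vars N :: ('nx,'nu,'nt,'np) dvar set) (SH t)" if "t \<in> {..<N}" for t
      using milp_mono_vars[OF _ LVsubX finRV] SH that by auto
    have mG: "milp_representable (region_vars N :: ('nx,'nu,'nt,'np) dvar set) (SG t)" if "t \<in> {..<N}" for t
      using milp_mono_vars[OF _ LVsubT finRV] SG that by auto
    show ?thesis unfolding Big_def
      by (intro milp_Int milp_INT finRV finite_atMost finite_lessThan mX mT mU mP mA mH mG)
  qed
  have key: "((\<forall>u\<in>U. f (h (xv t v) u) u (tv t v) (pv t v) \<le> f (h (xv t v) (uv t v)) (uv t v) (tv t v) (pv t v))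
       \<and> xv (Suc t) v = h (xv t v) (uv t v) \<and> tv (Suc t) v = g (xv t v) (uv t v) (tv t v) (pv t v))
     \<longleftrightarrow> (v \<in> SA t \<and> v \<in> SH t \<and> v \<in> SG t)"
    if dom: "xv t v \<in> X" "uv t v \<in> U" "tv t v \<in> Th" "pv t v \<in> P" for t v
  proof -
    have 1: "(\<forall>u\<in>U. f (h (xv t v) u) u (tv t v) (pv t v) \<le> f (h (xv t v) (uv t v)) (uv t v) (tv t v) (pv t v))
      \<longleftrightarrow> v \<in> SA t"
      using SA dom FOeq[OF dom(1) _ dom(3,4)] by auto
    have 2: "xv (Suc t) v = h (xv t v) (uv t v) \<longleftrightarrow> v \<in> SH t" using SH A3_h[OF dom(1,2)] by auto
    have 3: "tv (Suc t) v = g (xv t v) (uv t v) (tv t v) (pv t v) \<longleftrightarrow> v \<in> SG t" using SG dom by auto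
    show ?thesis using 1 2 3 by blast
  qed
  have "feasible_region N f h g X U Th P = Big"
  proof (intro set_eqI)
    fix v :: "('nx,'nu,'nt,'np) dvar \<Rightarrow> real"
    have "v \<in> feasible_region N f h g X U Th P \<longleftrightarrow>
      (\<forall>t\<le>N. xv t v \<in> X \<and> tv t v \<in> Th) \<and>
      (\<forall>t<N. pv t v \<in> P \<and> uv t v \<in> U \<and>
        (\<forall>u\<in>U. f (h (xv t v) u) u (tv t v) (pv t v) \<le> f (h (xv t v) (uv t v)) (uv t v) (tv t v) (pv t v)) \<and>
        xv (Suc t) v = h (xv t v) (uv t v) \<and> tv (Suc t) v = g (xv t v) (uv t v) (tv t v) (pv t v))"
      unfolding feasible_region_def traj_feasible_def xv_def uv_def tv_def pv_def by simp
    also have "\<dots> \<longleftrightarrow> v \<in> Big"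
    proof
      assume H: "(\<forall>t\<le>N. xv t v \<in> X \<and> tv t v \<in> Th) \<and>
      (\<forall>t<N. pv t v \<in> P \<and> uv t v \<in> U \<and>
        (\<forall>u\<in>U. f (h (xv t v) u) u (tv t v) (pv t v) \<le> f (h (xv t v) (uv t v)) (uv t v) (tv t v) (pv t v)) \<and>
        xv (Suc t) v = h (xv t v) (uv t v) \<and> tv (Suc t) v = g (xv t v) (uv t v) (tv t v) (pv t v))"
      have "\<forall>t<N. v \<in> SA t \<and> v \<in> SH t \<and> v \<in> SG t"
      proof (intro allI impI)
        fix t assume "t < N"
        then show "v \<in> SA t \<and> v \<in> SH t \<and> v \<in> SG t" using H key[of t v] by auto
      qed
      then show "v \<in> Big" using H unfolding Big_def by auto
    next
      assume B: "v \<in> Big"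
      then have d1: "\<forall>t\<le>N. xv t v \<in> X \<and> tv t v \<in> Th"
        and d2: "\<forall>t<N. uv t v \<in> U \<and> pv t v \<in> P \<and> v \<in> SA t \<and> v \<in> SH t \<and> v \<in> SG t"
        unfolding Big_def by auto
      have "\<forall>t<N. pv t v \<in> P \<and> uv t v \<in> U \<and>
        (\<forall>u\<in>U. f (h (xv t v) u) u (tv t v) (pv t v) \<le> f (h (xv t v) (uv t v)) (uv t v) (tv t v) (pv t v)) \<and>
        xv (Suc t) v = h (xv t v) (uv t v) \<and> tv (Suc t) v = g (xv t v) (uv t v) (tv t v) (pv t v)"
      proof (intro allI impI)
        fix t assume t: "t < N"
        then have dom: "xv t v \<in> X" "uv t v \<in> U" "tv t v \<in> Th" "pv t v \<in> P" using d1 d2 by auto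
        show "pv t v \<in> P \<and> uv t v \<in> U \<and>
        (\<forall>u\<in>U. f (h (xv t v) u) u (tv t v) (pv t v) \<le> f (h (xv t v) (uv t v)) (uv t v) (tv t v) (pv t v)) \<and>
        xv (Suc t) v = h (xv t v) (uv t v) \<and> tv (Suc t) v = g (xv t v) (uv t v) (tv t v) (pv t v)"
          using key[OF dom] d2 t dom by blast
      qed
      then show "(\<forall>t\<le>N. xv t v \<in> X \<and> tv t v \<in> Th) \<and>
      (\<forall>t<N. pv t v \<in> P \<and> uv t v \<in> U \<and>
        (\<forall>u\<in>U. f (h (xv t v) u) u (tv t v) (pv t v) \<le> f (h (xv t v) (uv t v)) (uv t v) (tv t v) (pv t v)) \<and>
        xv (Suc t) v = h (xv t v) (uv t v) \<and> tv (Suc t) v = g (xv t v) (uv t v) (tv t v) (pv t v))"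
        using d1 by blast
    qed
    finally show "v \<in> feasible_region N f h g X U Th P \<longleftrightarrow> v \<in> Big" .
  qed
  then show ?thesis using milpBig by simp
qed

end
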